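(* Suppose that at the end of iteration $h$ of the merging procedure, $[\ell,m]$ is a monochrome block of $Z^{(h)}$. Then (i) $Z^{(g)}[\ell,m]=Z^{(h)}[\ell,m]$ for every $g>h$; and (ii) during iteration $h+1$, for each symbol $c$, the set of positions $j$ assigned (i.e. at which $Z^{(h+1)}[j]$ is written) while the loop index $k$ ranges over $[\ell,m]$ and the symbol read is $c$ forms a monochrome block of $Z^{(h+1)}$ at the end of iteration $h+1$.
   Context: Let $\Sigma$ be a finite totally ordered alphabet. Let $\mathsf{t}_0[1,n_0]$ and $\mathsf{t}_1[1,n_1]$ be strings with $\mathsf{t}_0[n_0]=\$_0$ and $\mathsf{t}_1[n_1]=\$_1$, where $\$_0<\$_1$ are symbols occurring nowhere else in $\mathsf{t}_0,\mathsf{t}_1$ and smaller than every other symbol. Let $n=n_0+n_1$. For $b\in\{0,1\}$, $\mathsf{sa}_b[1,n_b]$ is the suffix array of $\mathsf{t}_b$ (the permutation of $[1,n_b]$ listing the starting positions of suffixes in increasing lexicographic order). The BWT of $\mathsf{t}_b$ is $\mathsf{bwt}_b[i]=\mathsf{t}_b[\mathsf{sa}_b[i]-1]$ if $\mathsf{sa}_b[i]>1$ and $\mathsf{bwt}_b[i]=\mathsf{t}_b[n_b]$ if $\mathsf{sa}_b[i]=1$. Merging procedure. Initially (this is the "end of iteration 0") $Z^{(0)}=0^{n_0}1^{n_1}$ and $B[1,n+1]$ is the integer array $B=1\,0^{n-1}\,1$. For $h=1,2,\ldots$, iteration $h$ computes the bit vector $Z^{(h)}[1,n]$ from $Z^{(h-1)}$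 and updates $B$ in place, as follows. Set, for each symbol $c$, $F[c]=1+$ (number of entries of $\mathsf{bwt}_0$ and $\mathsf{bwt}_1$ strictly smaller than $c$, counting $\$_0,\$_1$) and $\mathsf{Block\_id}[c]=-1$; set $k_0=k_1=1$. For $k=1,2,\ldots,n$ in order: if $B[k]\neq 0$ and $B[k]\neq h$, set $\mathsf{id}:=k$; let $b=Z^{(h-1)}[k]$, $c=\mathsf{bwt}_b[k_b]$, and increment $k_b$; if $c\notin\{\$_0,\$_1\}$ set $j:=F[c]$ and increment $F[c]$, otherwise set $j:=b+1$; set $Z^{(h)}[j]:=b$; if $\mathsf{Block\_id}[c]\neq\mathsf{id}$, then set $\mathsf{Block\_id}[c]:=\mathsf{id}$ and, if $B[j]=0$, set $B[j]:=h$. "At the end of iteration $h$" refers to the state of $Z^{(h)}$ and $B$ after iteration $h$ is completed. Blocks. At the end of iteration $h$, an interval $[\ell,m]$ with $1\le\ell\le m\le n$ such that $B[\ell]\neq0$, $B[\ell+1]=\cdots=B[m]=0$ and $B[m+1]\neq0$ is a block of $Z^{(h)}$; it is monochrome if $Z^{(h)}[\ell],\ldots,Z^{(h)}[m]$ are all $0$ or all $1$. *)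

theory Defs
  imports Main
begin

text \<open>Strings are lists; position i (1-based) of t is t ! (i-1).
  The suffix starting at position i is drop (i-1) t.\<close>

definition suffix_at :: "'a list \<Rightarrow> nat \<Rightarrow> 'a list" where
  "suffix_at t i = drop (i - 1) t"

definition is_suffix_array :: "'a::linorder list \<Rightarrow> nat list \<Rightarrow> bool" where
  "is_suffix_array t s \<longleftrightarrow>
     length s = length t \<and> set s = {1..length t} \<and>
     sorted_wrt (\<lambda>i j. ord_class.lexordp (suffix_at t i) (suffix_at t j)) s"

definition sa :: "'a::linorder list \<Rightarrow> nat list" where
  "sa t = (THE s. is_suffix_array t s)"

text \<open>BWT as a list; entry i (1-based) is (bwt t) ! (i-1).\<close>
definition bwt :: "'a::linorder list \<Rightarrow> 'a list" where
  "bwt t = map (\<lambda>p. if p > 1 then t ! (p - 2) else t ! (length t - 1)) (sa t)"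

definition bwt_sel :: "'a::linorder list \<Rightarrow> 'a list \<Rightarrow> nat \<Rightarrow> nat \<Rightarrow> 'a" where
  "bwt_sel t0 t1 b k = (if b = 0 then bwt t0 else bwt t1) ! (k - 1)"

record 'a mstate =
  Zn   :: "nat \<Rightarrow> nat"       \<comment> \<open>Z^(h) being built (bits as 0/1)\<close>
  Bs   :: "nat \<Rightarrow> nat"
  Fs   :: "'a \<Rightarrow> nat"
  Bid  :: "'a \<Rightarrow> int"
  kk0  :: nat
  kk1  :: nat
  cid  :: int
  mlog :: "(nat \<times> 'a \<times> nat) list"  \<comment> \<open>(k, c, j) triples: at loop index k symbol c was read and Z[j] written\<close>

text \<open>One execution of the loop body for loop index k in iteration h,
  with Zold = Z^(h-1).\<close>
definition mstep :: "'a::linorder list \<Rightarrow> 'a list \<Rightarrow> 'a \<Rightarrow> 'a \<Rightarrow> nat \<Rightarrow> (nat \<Rightarrow> nat)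
    \<Rightarrow> 'a mstate \<Rightarrow> nat \<Rightarrow> 'a mstate" where
  "mstep t0 t1 d0 d1 h Zold st k =
    (let idv = (if Bs st k \<noteq> 0 \<and> Bs st k \<noteq> h then int k else cid st);
         b = Zold k;
         kb = (if b = 0 then kk0 st else kk1 st);
         c = bwt_sel t0 t1 b kb;
         k0' = (if b = 0 then kk0 st + 1 else kk0 st);
         k1' = (if b = 0 then kk1 st else kk1 st + 1);
         j = (if c \<notin> {d0, d1} then Fs st c else b + 1);
         F' = (if c \<notin> {d0, d1} then (Fs st)(c := Fs st c + 1) else Fs st);
         Z' = (Zn st)(j := b);
         Bid' = (if Bid st c \<noteq> idv then (Bid st)(c := idv) else Bid st);
         B' = (if Bid st c \<noteq> idv \<and> Bs st j = 0 then (Bs st)(j := h) else Bs st)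
     in \<lparr>Zn = Z', Bs = B', Fs = F', Bid = Bid', kk0 = k0', kk1 = k1', cid = idv,
         mlog = mlog st @ [(k, c, j)]\<rparr>)"

definition F_init :: "'a::linorder list \<Rightarrow> 'a list \<Rightarrow> 'a \<Rightarrow> nat" where
  "F_init t0 t1 c = 1 + length (filter (\<lambda>x. x < c) (bwt t0)) + length (filter (\<lambda>x. x < c) (bwt t1))"

text \<open>The initial contents of the new Z and the initial value of id are irrelevant
  (every position is written; id is compared only against Block_id values).\<close>
definition run_iter :: "'a::linorder list \<Rightarrow> 'a list \<Rightarrow> 'a \<Rightarrow> 'a \<Rightarrow> nat \<Rightarrow> (nat \<Rightarrow> nat)
    \<Rightarrow> (nat \<Rightarrow> nat) \<Rightarrow> 'a mstate" where
  "run_iter t0 t1 d0 d1 h Zold B =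
     foldl (mstep t0 t1 d0 d1 h Zold)
       \<lparr>Zn = (\<lambda>_. 0), Bs = B, Fs = F_init t0 t1, Bid = (\<lambda>_. -1), kk0 = 1, kk1 = 1,
        cid = 0, mlog = []\<rparr>
       [1..<length t0 + length t1 + 1]"

fun merge_state :: "'a::linorder list \<Rightarrow> 'a list \<Rightarrow> 'a \<Rightarrow> 'a \<Rightarrow> nat
    \<Rightarrow> (nat \<Rightarrow> nat) \<times> (nat \<Rightarrow> nat)" where
  "merge_state t0 t1 d0 d1 0 =
     ((\<lambda>i. if i \<le> length t0 then 0 else 1),
      (\<lambda>i. if i = 1 \<or> i = length t0 + length t1 + 1 then 1 else 0))"
| "merge_state t0 t1 d0 d1 (Suc h) =
     (let (Z, B) = merge_state t0 t1 d0 d1 h;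
          st = run_iter t0 t1 d0 d1 (Suc h) Z B
      in (Zn st, Bs st))"

definition Zh :: "'a::linorder list \<Rightarrow> 'a list \<Rightarrow> 'a \<Rightarrow> 'a \<Rightarrow> nat \<Rightarrow> nat \<Rightarrow> nat" where
  "Zh t0 t1 d0 d1 h = fst (merge_state t0 t1 d0 d1 h)"

definition Bh :: "'a::linorder list \<Rightarrow> 'a list \<Rightarrow> 'a \<Rightarrow> 'a \<Rightarrow> nat \<Rightarrow> nat \<Rightarrow> nat" where
  "Bh t0 t1 d0 d1 h = snd (merge_state t0 t1 d0 d1 h)"

definition iter_log :: "'a::linorder list \<Rightarrow> 'a list \<Rightarrow> 'a \<Rightarrow> 'a \<Rightarrow> nat \<Rightarrow> (nat \<times> 'a \<times> nat) list" where
  "iter_log t0 t1 d0 d1 h =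
     mlog (run_iter t0 t1 d0 d1 (Suc h) (Zh t0 t1 d0 d1 h) (Bh t0 t1 d0 d1 h))"

definition is_block :: "(nat \<Rightarrow> nat) \<Rightarrow> nat \<Rightarrow> nat \<Rightarrow> nat \<Rightarrow> bool" where
  "is_block B n l m \<longleftrightarrow> 1 \<le> l \<and> l \<le> m \<and> m \<le> n \<and> B l \<noteq> 0 \<and>
     (\<forall>i. l < i \<and> i \<le> m \<longrightarrow> B i = 0) \<and> B (m + 1) \<noteq> 0"

definition monochrome :: "(nat \<Rightarrow> nat) \<Rightarrow> nat \<Rightarrow> nat \<Rightarrow> bool" where
  "monochrome Z l m \<longleftrightarrow> (\<forall>i\<in>{l..m}. Z i = 0) \<or> (\<forall>i\<in>{l..m}. Z i = 1)"

definition valid_texts :: "'a::linorder list \<Rightarrow> 'a list \<Rightarrow> 'a \<Rightarrow> 'a \<Rightarrow> bool" where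
  "valid_texts t0 t1 d0 d1 \<longleftrightarrow>
     t0 \<noteq> [] \<and> t1 \<noteq> [] \<and> last t0 = d0 \<and> last t1 = d1 \<and> d0 < d1 \<and>
     d0 \<notin> set (butlast t0) \<and> d0 \<notin> set t1 \<and> d1 \<notin> set t0 \<and> d1 \<notin> set (butlast t1) \<and>
     (\<forall>x. x \<noteq> d0 \<and> x \<noteq> d1 \<longrightarrow> d1 < x)"

end

theory Submission
  imports Defs "HOL-Library.List_Lexorder" "HOL-Library.Product_Lexorder" "HOL-Library.Multiset"
begin


lemma lexordp_is_less: "ord_class.lexordp xs ys \<longleftrightarrow> xs < (ys::'a::linorder list)"
  by (simp add: lexordp_conv_lexord list_less_def)

lemma suffix_inj: "inj_on (suffix_at t) {1..length t}"
proof (rule inj_onI)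
  fix i j assume "i \<in> {1..length t}" "j \<in> {1..length t}" "suffix_at t i = suffix_at t j"
  then have "length (suffix_at t i) = length (suffix_at t j)" by simp
  with \<open>i \<in> _\<close> \<open>j \<in> _\<close> show "i = j" by (auto simp: suffix_at_def)
qed

lemma sa_exists_unique:
  fixes t :: "'a::linorder list"
  shows "is_suffix_array t (sa t)"
proof -
  define n where "n = length t"
  define f where "f = suffix_at t"
  have inj: "inj_on f {1..n}" using suffix_inj unfolding f_def n_def .
  define L where "L = sorted_list_of_set (f ` {1..n})"
  define s0 where "s0 = map (inv_into {1..n} f) L"
  have setL: "set L = f ` {1..n}" unfolding L_def by simp
  have sL: "sorted_wrt (<) L" unfolding L_def by simp
  have ms0: "map f s0 = L" unfolding s0_def map_map
    by (rule map_idI) (metis comp_apply f_inv_into_f setL)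
  have set0: "set s0 = {1..n}" unfolding s0_def using setL inj by simp
  have len0: "length s0 = n"
  proof -
    have "length L = card (f ` {1..n})" unfolding L_def by simp
    also have "\<dots> = n" using card_image[OF inj] by simp
    finally show ?thesis unfolding s0_def by simp
  qed
  have R: "\<And>s. sorted_wrt (\<lambda>i j. ord_class.lexordp (suffix_at t i) (suffix_at t j)) s
            \<longleftrightarrow> sorted_wrt (<) (map f s)"
    by (simp add: sorted_wrt_map lexordp_is_less f_def)
  have iss: "is_suffix_array t s0"
    unfolding is_suffix_array_def using len0 set0 sL ms0 R n_def by simp
  have uniq: "s = s0" if "is_suffix_array t s" for s
  proof -
    have a: "sorted_wrt (<) (map f s)" "set s = {1..n}"
      using that R unfolding is_suffix_array_def n_def by auto
    have "map f s = map f s0"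
      using strict_sorted_equal[of L "map f s"] a sL ms0 setL by simp
    then show ?thesis using map_inj_on[of f s s0] inj a set0 by simp
  qed
  show ?thesis unfolding sa_def by (rule theI[where a=s0]) (fact iss, fact uniq)
qed

lemma sa_props:
  fixes t :: "'a::linorder list"
  shows "length (sa t) = length t" "set (sa t) = {1..length t}" "distinct (sa t)"
proof -
  show 1: "length (sa t) = length t" "set (sa t) = {1..length t}"
    using sa_exists_unique[of t] unfolding is_suffix_array_def by auto
  show "distinct (sa t)" using 1 by (simp add: card_distinct)
qed

lemma length_bwt[simp]: "length (bwt t) = length t"
  by (simp add: bwt_def sa_props)

lemma mset_bwt:
  fixes t :: "'a::linorder list"
  assumes "t \<noteq> []"
  shows "mset (bwt t) = mset t"
proof -
  define n where "n = length t"
  define g where "g = (\<lambda>p. if p > 1 then t ! (p - 2) else t ! (length t - 1))"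
  have "mset (sa t) = mset [1..<Suc n]"
  proof -
    have "set (sa t) = set [1..<Suc n]" using sa_props(2)[of t] by (simp only: set_upt atLeastLessThanSuc_atLeastAtMost n_def)
    then show ?thesis using sa_props(3)[of t] set_eq_iff_mset_eq_distinct by (metis distinct_upt)
  qed
  moreover have "mset (bwt t) = image_mset g (mset (sa t))" by (simp add: bwt_def g_def)
  ultimately have "mset (bwt t) = mset (map g [1..<Suc n])" by simp
  also have "map g [1..<Suc n] = last t # butlast t"
  proof -
    have n1: "n \<ge> 1" using assms n_def by (cases t) auto
    have "[1..<Suc n] = 1 # [2..<Suc n]" using n1 upt_conv_Cons[of 1 "Suc n"] by (simp add: numeral_2_eq_2)
    moreover have "map g [2..<Suc n] = butlast t"
      by (rule nth_equalityI) (auto simp: g_def n_def nth_butlast simp del: upt_Suc)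
    moreover have "g 1 = last t" using assms by (simp add: g_def last_conv_nth)
    ultimately show ?thesis by simp
  qed
  also have "mset (last t # butlast t) = mset t"
  proof -
    have "mset t = mset (butlast t @ [last t])" using append_butlast_last_id[OF assms] by simp
    then show ?thesis by simp
  qed
  finally show ?thesis .
qed



lemma list_less_append:
  fixes xs ys :: "'a::linorder list"
  shows "length xs = length ys \<Longrightarrow> xs < ys \<Longrightarrow> xs @ u < ys @ v"
proof (induction xs arbitrary: ys)
  case Nil then show ?case by simp
next
  case (Cons a xs) then show ?case by (cases ys) auto
qed

lemma list_le_take:
  fixes xs ys :: "'a::linorder list"
  shows "length xs = length ys \<Longrightarrow> xs \<le> ys \<Longrightarrow> take h xs \<le> take h ys"
proof (induction xs arbitrary: ys h)
  case Nil then show ?case by simp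
next
  case (Cons a xs) then show ?case
    by (cases ys; cases h) (auto simp: less_imp_le)
qed

lemma card_filter_nth:
  "card {r \<in> {1..length xs}. P (xs ! (r - 1))} = length (filter P xs)"
proof -
  have "{r \<in> {1..length xs}. P (xs ! (r - 1))} = Suc ` {i. i < length xs \<and> P (xs ! i)}"
  proof (rule set_eqI, rule iffI)
    fix r assume "r \<in> {r \<in> {1..length xs}. P (xs ! (r - 1))}"
    then show "r \<in> Suc ` {i. i < length xs \<and> P (xs ! i)}"
      by (intro image_eqI[of _ _ "r - 1"]) auto
  qed auto
  then show ?thesis by (simp add: card_image length_filter_conv_card)
qed

lemma rank_less:
  fixes k :: "'b \<Rightarrow> 'c::linorder"
  assumes "finite S" "x \<in> S" "y \<in> S" "k x < k y"
  shows "card {z \<in> S. k z < k x} < card {z \<in> S. k z < k y}"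
proof (rule psubset_card_mono)
  show "finite {z \<in> S. k z < k y}" using assms by simp
  show "{z \<in> S. k z < k x} < {z \<in> S. k z < k y}"
    using assms by (auto intro: less_trans)
qed

lemma rank_bij:
  fixes k :: "'b \<Rightarrow> 'c::linorder"
  assumes fin: "finite S" and inj: "inj_on k S"
  shows "bij_betw (\<lambda>x. 1 + card {z \<in> S. k z < k x}) S {1..card S}"
proof -
  let ?r = "\<lambda>x. 1 + card {z \<in> S. k z < k x}"
  have injr: "inj_on ?r S"
  proof (rule inj_onI)
    fix x y assume xy: "x \<in> S" "y \<in> S" "?r x = ?r y"
    show "x = y"
    proof (rule ccontr)
      assume "x \<noteq> y"
      then have "k x \<noteq> k y" using inj xy by (auto dest: inj_onD)
      then have "k x < k y \<or> k y < k x" by auto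
      moreover have "card {z \<in> S. k z < k x} = card {z \<in> S. k z < k y}" using xy(3) by simp
      ultimately show False using rank_less[where k=k, OF fin xy(1,2)] rank_less[where k=k, OF fin xy(2,1)] by fastforce
    qed
  qed
  have sub: "?r ` S \<subseteq> {1..card S}"
  proof
    fix u assume "u \<in> ?r ` S"
    then obtain x where x: "x \<in> S" "u = ?r x" by auto
    have "{z \<in> S. k z < k x} \<subseteq> S - {x}" by auto
    then have "card {z \<in> S. k z < k x} \<le> card (S - {x})" using fin by (intro card_mono) auto
    also have "\<dots> = card S - 1" using x fin by simp
    finally have "card {z \<in> S. k z < k x} \<le> card S - 1" .
    moreover have "card S \<ge> 1" using x fin by (metis One_nat_def Suc_leI card_gt_0_iff empty_iff)
    ultimately show "u \<in> {1..card S}" using x by simp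
  qed
  have "card (?r ` S) = card {1..card S}" using card_image[OF injr] by simp
  then have "?r ` S = {1..card S}" using sub by (intro card_subset_eq) auto
  then show ?thesis using injr by (simp add: bij_betw_def)
qed

lemma adj_change:
  fixes f :: "nat \<Rightarrow> 'b::order"
  assumes mono: "\<And>p p'. a \<le> p \<Longrightarrow> p \<le> p' \<Longrightarrow> p' \<le> b \<Longrightarrow> f p \<le> f p'" and ab: "a \<le> b"
  shows "(\<exists>p\<in>{a<..b}. f (p - 1) \<noteq> f p) \<longleftrightarrow> f a \<noteq> f b"
proof
  assume "\<exists>p\<in>{a<..b}. f (p - 1) \<noteq> f p"
  then obtain p where p: "a < p" "p \<le> b" "f (p - 1) \<noteq> f p" by auto
  show "f a \<noteq> f b"
  proof
    assume eq: "f a = f b"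
    have "f a \<le> f (p - 1)" "f (p - 1) \<le> f p" "f p \<le> f b" using p by (auto intro!: mono)
    then show False using eq p(3) by (metis order_antisym order_trans)
  qed
next
  assume ne: "f a \<noteq> f b"
  show "\<exists>p\<in>{a<..b}. f (p - 1) \<noteq> f p"
    using ab ne
  proof (induction b)
    case 0 then show ?case by simp
  next
    case (Suc b)
    show ?case
    proof (cases "f b = f (Suc b)")
      case True
      then have "a \<noteq> Suc b" using Suc.prems by auto
      then have "a \<le> b" using Suc.prems by simp
      then obtain p where "p\<in>{a<..b}" "f (p - 1) \<noteq> f p" using Suc True by auto
      then show ?thesis by auto
    next
      case False
      have "a \<noteq> Suc b" using Suc.prems by auto
      then show ?thesis using False Suc.prems by (intro bexI[of _ "Suc b"]) auto
    qed
  qed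
qed



locale mctx =
  fixes t0 t1 :: "'a::linorder list" and d0 d1 :: 'a
  assumes valid: "valid_texts t0 t1 d0 d1"
begin

definition N :: nat where "N = length t0 + length t1"
definition W :: "nat \<Rightarrow> 'a list" where "W b = (if b = 0 then bwt t0 else bwt t1)"
definition len :: "nat \<Rightarrow> nat" where "len b = length (W b)"
definition cw :: "nat \<Rightarrow> nat \<Rightarrow> 'a" where "cw b r = W b ! (r - 1)"
definition ch :: "nat \<times> nat \<Rightarrow> 'a" where "ch x = cw (fst x) (snd x)"
definition Its :: "(nat \<times> nat) set" where
  "Its = {x. fst x < 2 \<and> 1 \<le> snd x \<and> snd x \<le> len (fst x)}"

lemma ch_bwt_sel: "ch x = bwt_sel t0 t1 (fst x) (snd x)"
  by (simp add: ch_def cw_def W_def bwt_sel_def)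

lemma len0: "len 0 = length t0" and len1: "len 1 = length t1"
  by (simp_all add: len_def W_def)

lemma Its_split: "Its = ({0} \<times> {1..len 0}) \<union> ({1} \<times> {1..len 1})"
  by (auto simp: Its_def less_2_cases_iff)

lemma finite_Its[simp]: "finite Its"
  by (simp add: Its_split)

lemma card_Its: "card Its = N"
proof -
  have "card Its = card ({0::nat} \<times> {1..len 0}) + card ({1::nat} \<times> {1..len 1})"
    unfolding Its_split by (rule card_Un_disjoint) auto
  then show ?thesis by (simp add: N_def len_def W_def card_cartesian_product)
qed

lemma card_Its_P: "card {x \<in> Its. P (ch x)} = length (filter P (W 0)) + length (filter P (W 1))"
proof -
  have e: "{x \<in> Its. P (ch x)} = ({0} \<times> {r \<in> {1..len 0}. P (cw 0 r)}) \<union> ({1} \<times> {r \<in> {1..len 1}. P (cw 1 r)})"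
    by (auto simp: Its_split ch_def)
  have "card {x \<in> Its. P (ch x)} = card ({0::nat} \<times> {r \<in> {1..len 0}. P (cw 0 r)}) + card ({1::nat} \<times> {r \<in> {1..len 1}. P (cw 1 r)})"
    unfolding e by (rule card_Un_disjoint) auto
  also have "\<dots> = card {r \<in> {1..len 0}. P (cw 0 r)} + card {r \<in> {1..len 1}. P (cw 1 r)}"
    by (simp add: card_cartesian_product)
  also have "\<dots> = length (filter P (W 0)) + length (filter P (W 1))"
    unfolding cw_def len_def card_filter_nth ..
  finally show ?thesis .
qed

section \<open>LF mapping\<close>

definition LF :: "nat \<Rightarrow> nat \<Rightarrow> nat" where
  "LF b r = card {r' \<in> {1..len b}. cw b r' < cw b r} + card {r' \<in> {1..r}. cw b r' = cw b r}"

lemma LF_less: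
  assumes r: "r \<in> {1..len b}" and r': "r' \<in> {1..len b}"
    and lt: "cw b r < cw b r' \<or> cw b r = cw b r' \<and> r < r'"
  shows "LF b r < LF b r'"
  using lt
proof
  assume lt1: "cw b r < cw b r'"
  have "card {r'' \<in> {1..r}. cw b r'' = cw b r} \<le> card {r'' \<in> {1..len b}. cw b r'' = cw b r}"
    using r by (intro card_mono) auto
  then have "LF b r \<le> card {r'' \<in> {1..len b}. cw b r'' < cw b r} + card {r'' \<in> {1..len b}. cw b r'' = cw b r}"
    unfolding LF_def by simp
  also have "\<dots> = card ({r'' \<in> {1..len b}. cw b r'' < cw b r} \<union> {r'' \<in> {1..len b}. cw b r'' = cw b r})"
    by (rule card_Un_disjoint[symmetric]) auto
  also have "\<dots> \<le> card {r'' \<in> {1..len b}. cw b r'' < cw b r'}"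
    using lt1 by (intro card_mono) auto
  also have "\<dots> < LF b r'"
  proof -
    have "r' \<in> {r'' \<in> {1..r'}. cw b r'' = cw b r'}" using r' by auto
    then have "card {r'' \<in> {1..r'}. cw b r'' = cw b r'} > 0" by (auto simp: card_gt_0_iff)
    then show ?thesis unfolding LF_def by simp
  qed
  finally show ?thesis .
next
  assume lt2: "cw b r = cw b r' \<and> r < r'"
  have sub: "{r'' \<in> {1..r}. cw b r'' = cw b r} \<subseteq> {r'' \<in> {1..r'}. cw b r'' = cw b r'}"
    using lt2 by auto
  have "r' \<in> {r'' \<in> {1..r'}. cw b r'' = cw b r'}" "r' \<notin> {r'' \<in> {1..r}. cw b r'' = cw b r}"
    using lt2 r' by auto
  then have "{r'' \<in> {1..r}. cw b r'' = cw b r} \<subset> {r'' \<in> {1..r'}. cw b r'' = cw b r'}"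
    using sub by blast
  then have "card {r'' \<in> {1..r}. cw b r'' = cw b r} < card {r'' \<in> {1..r'}. cw b r'' = cw b r'}"
    by (intro psubset_card_mono) auto
  then show ?thesis using lt2 unfolding LF_def by simp
qed

lemma LF_range:
  assumes r: "r \<in> {1..len b}"
  shows "LF b r \<in> {1..len b}"
proof -
  have "card {r'' \<in> {1..r}. cw b r'' = cw b r} \<le> card {r'' \<in> {1..len b}. cw b r'' = cw b r}"
    using r by (intro card_mono) auto
  then have "LF b r \<le> card {r'' \<in> {1..len b}. cw b r'' < cw b r} + card {r'' \<in> {1..len b}. cw b r'' = cw b r}"
    unfolding LF_def by simp
  also have "\<dots> = card ({r'' \<in> {1..len b}. cw b r'' < cw b r} \<union> {r'' \<in> {1..len b}. cw b r'' = cw b r})"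
    by (rule card_Un_disjoint[symmetric]) auto
  also have "\<dots> \<le> card {1..len b}" by (intro card_mono) auto
  finally have up: "LF b r \<le> len b" by simp
  have "r \<in> {r'' \<in> {1..r}. cw b r'' = cw b r}" using r by auto
  then have "card {r'' \<in> {1..r}. cw b r'' = cw b r} > 0" by (auto simp: card_gt_0_iff)
  then have "LF b r \<ge> 1" unfolding LF_def by simp
  with up show ?thesis by simp
qed

lemma LF_less_iff:
  assumes r: "r \<in> {1..len b}" and r': "r' \<in> {1..len b}"
  shows "LF b r < LF b r' \<longleftrightarrow> (cw b r < cw b r' \<or> cw b r = cw b r' \<and> r < r')"
proof
  assume l: "LF b r < LF b r'"
  show "cw b r < cw b r' \<or> cw b r = cw b r' \<and> r < r'"
  proof (rule ccontr)
    assume "\<not> ?thesis"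
    then have "cw b r' < cw b r \<or> cw b r' = cw b r \<and> r' < r \<or> r = r'" by auto
    then show False
    proof (elim disjE)
      assume "r = r'" then show False using l by simp
    qed (use LF_less[OF r' r] l in auto)
  qed
qed (rule LF_less[OF r r'])

lemma LF_inj: "inj_on (LF b) {1..len b}"
proof (rule inj_onI)
  fix r r' assume a: "r \<in> {1..len b}" "r' \<in> {1..len b}" "LF b r = LF b r'"
  show "r = r'"
  proof (rule ccontr)
    assume "r \<noteq> r'"
    then have "r < r' \<or> r' < r" by auto
    then show False using LF_less_iff[OF a(1,2)] LF_less_iff[OF a(2,1)] a(3)
      by (metis less_irrefl neqE)
  qed
qed

lemma LF_bij: "bij_betw (LF b) {1..len b} {1..len b}"
proof -
  have sub: "LF b ` {1..len b} \<subseteq> {1..len b}" using LF_range by auto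
  have "card (LF b ` {1..len b}) = card {1..len b}" using card_image[OF LF_inj] by simp
  then have "LF b ` {1..len b} = {1..len b}" using sub by (intro card_subset_eq) auto
  then show ?thesis using LF_inj by (simp add: bij_betw_def)
qed

definition psi :: "nat \<Rightarrow> nat \<Rightarrow> nat" where "psi b = inv_into {1..len b} (LF b)"

lemma psi_LF: "r \<in> {1..len b} \<Longrightarrow> psi b (LF b r) = r"
  unfolding psi_def by (rule inv_into_f_f[OF LF_inj])

lemma LF_psi: "y \<in> {1..len b} \<Longrightarrow> LF b (psi b y) = y"
  unfolding psi_def using LF_bij by (metis bij_betw_def f_inv_into_f)

lemma psi_range: "y \<in> {1..len b} \<Longrightarrow> psi b y \<in> {1..len b}"
  unfolding psi_def using LF_bij by (metis bij_betw_def inv_into_into)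


section \<open>Prefixes and positions\<close>

lemma Its_iff: "(b, y) \<in> Its \<longleftrightarrow> b < 2 \<and> y \<in> {1..len b}"
  by (auto simp: Its_def)

primrec pf :: "nat \<Rightarrow> nat \<times> nat \<Rightarrow> 'a list" where
  "pf 0 x = []"
| "pf (Suc h) x = cw (fst x) (psi (fst x) (snd x)) # pf h (fst x, psi (fst x) (snd x))"

lemma length_pf[simp]: "length (pf h x) = h"
  by (induction h arbitrary: x) auto

lemma pf_add: "\<exists>u. pf (h + d) x = pf h x @ u"
proof (induction h arbitrary: x)
  case 0 then show ?case by simp
next
  case (Suc h)
  then obtain u where "pf (h + d) (fst x, psi (fst x) (snd x)) = pf h (fst x, psi (fst x) (snd x)) @ u" by blast
  then show ?case by simp
qed

lemma take_pf: "h \<le> g \<Longrightarrow> take h (pf g x) = pf h x"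
  using pf_add[of h "g - h" x] by auto

definition lf :: "nat \<times> nat \<Rightarrow> nat \<times> nat" where "lf x = (fst x, LF (fst x) (snd x))"

lemma lf_Its: "x \<in> Its \<Longrightarrow> lf x \<in> Its"
  using LF_range by (cases x) (auto simp: lf_def Its_iff)

lemma lf_inj: "inj_on lf Its"
proof (rule inj_onI)
  fix x y assume a: "x \<in> Its" "y \<in> Its" "lf x = lf y"
  then have "fst x = fst y" by (simp add: lf_def)
  moreover have "snd x \<in> {1..len (fst x)}" "snd y \<in> {1..len (fst x)}" using a calculation by (auto simp: Its_def)
  ultimately show "x = y" using a(3) LF_inj by (metis inj_onD lf_def prod.collapse prod.inject)
qed

lemma lf_bij: "bij_betw lf Its Its"
proof -
  have sub: "lf ` Its \<subseteq> Its" using lf_Its by auto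
  have "card (lf ` Its) = card Its" using card_image[OF lf_inj] by simp
  then have "lf ` Its = Its" using sub by (intro card_subset_eq) auto
  then show ?thesis using lf_inj by (simp add: bij_betw_def)
qed

lemma lf_surj: "y \<in> Its \<Longrightarrow> \<exists>x\<in>Its. y = lf x"
  using lf_bij by (metis bij_betw_imp_surj_on imageE)

lemma fst_lf[simp]: "fst (lf x) = fst x" by (simp add: lf_def)

lemma pf_Suc_lf: "x \<in> Its \<Longrightarrow> pf (Suc h) (lf x) = ch x # pf h x"
  by (cases x) (simp add: lf_def psi_LF ch_def Its_iff)

lemma pf_mono:
  "(b, y) \<in> Its \<Longrightarrow> (b, y') \<in> Its \<Longrightarrow> y \<le> y' \<Longrightarrow> pf h (b, y) \<le> pf h (b, y')"
proof (induction h arbitrary: y y')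
  case 0 then show ?case by simp
next
  case (Suc h)
  show ?case
  proof (cases "y = y'")
    case True then show ?thesis by simp
  next
    case False
    then have lt: "y < y'" using Suc.prems by simp
    define r where "r = psi b y"
    define r' where "r' = psi b y'"
    have yr: "y \<in> {1..len b}" "y' \<in> {1..len b}" "b < 2" using Suc.prems by (auto simp: Its_iff)
    have rr: "r \<in> {1..len b}" "r' \<in> {1..len b}" using psi_range yr unfolding r_def r'_def by auto
    have "LF b r = y" "LF b r' = y'" using LF_psi yr unfolding r_def r'_def by auto
    then have c: "cw b r < cw b r' \<or> cw b r = cw b r' \<and> r < r'" using LF_less_iff[OF rr] lt by simp
    have e: "pf (Suc h) (b, y) = cw b r # pf h (b, r)" "pf (Suc h) (b, y') = cw b r' # pf h (b, r')"
      by (simp_all add: r_def r'_def)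
    have ir: "(b, r) \<in> Its" "(b, r') \<in> Its" using rr yr by (auto simp: Its_iff)
    show ?thesis unfolding e using c Suc.IH[OF ir] by auto
  qed
qed

definition key :: "nat \<Rightarrow> nat \<times> nat \<Rightarrow> 'a list \<times> nat \<times> nat" where
  "key h x = (pf h x, fst x, snd x)"

lemma key_inj: "inj_on (key h) S"
  by (rule inj_onI) (auto simp: key_def prod_eq_iff)

definition pos :: "nat \<Rightarrow> nat \<times> nat \<Rightarrow> nat" where
  "pos h x = 1 + card {z \<in> Its. key h z < key h x}"

lemma pos_bij: "bij_betw (pos h) Its {1..N}"
  using rank_bij[OF finite_Its key_inj[of h]] unfolding pos_def card_Its .

lemma pos_range: "x \<in> Its \<Longrightarrow> pos h x \<in> {1..N}"
  using pos_bij by (metis bij_betwE)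

lemma pos_inj: "inj_on (pos h) Its"
  using pos_bij bij_betw_def by blast

lemma pos_less: "x \<in> Its \<Longrightarrow> y \<in> Its \<Longrightarrow> pos h x < pos h y \<longleftrightarrow> key h x < key h y"
proof
  assume a: "x \<in> Its" "y \<in> Its" "key h x < key h y"
  then show "pos h x < pos h y" unfolding pos_def using rank_less[where k="key h", OF finite_Its] by simp
next
  assume a: "x \<in> Its" "y \<in> Its" "pos h x < pos h y"
  show "key h x < key h y"
  proof (rule ccontr)
    assume "\<not> key h x < key h y"
    then have "key h y < key h x \<or> key h y = key h x" by auto
    then show False
    proof
      assume "key h y < key h x"
      then have "pos h y < pos h x" unfolding pos_def using rank_less[where k="key h", OF finite_Its] a by simp
      then show False using a by simp
    next
      assume "key h y = key h x" then have "y = x" using key_inj[of h Its] a by (auto dest: inj_onD)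
      then show False using a by simp
    qed
  qed
qed

lemma pos_le: "x \<in> Its \<Longrightarrow> y \<in> Its \<Longrightarrow> pos h x \<le> pos h y \<longleftrightarrow> key h x \<le> key h y"
  using pos_less[of y x h] by (simp add: not_less[symmetric])

definition itm :: "nat \<Rightarrow> nat \<Rightarrow> nat \<times> nat" where "itm h p = inv_into Its (pos h) p"

lemma itm_Its: "p \<in> {1..N} \<Longrightarrow> itm h p \<in> Its"
  unfolding itm_def using pos_bij by (metis bij_betw_def inv_into_into)

lemma pos_itm: "p \<in> {1..N} \<Longrightarrow> pos h (itm h p) = p"
  unfolding itm_def using pos_bij by (metis bij_betw_def f_inv_into_f)

lemma itm_pos: "x \<in> Its \<Longrightarrow> itm h (pos h x) = x"
  unfolding itm_def using pos_inj by (rule inv_into_f_f)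

lemma key_le_pf: "key g x \<le> key g y \<Longrightarrow> pf g x \<le> pf g y"
  by (auto simp: key_def)

lemma pf_itm_mono:
  assumes "h \<le> g" "p \<le> p'" "p \<in> {1..N}" "p' \<in> {1..N}"
  shows "pf h (itm g p) \<le> pf h (itm g p')"
proof -
  have "pos g (itm g p) \<le> pos g (itm g p')" using assms pos_itm by simp
  then have "key g (itm g p) \<le> key g (itm g p')"
    using pos_le[OF itm_Its[OF assms(3), of g] itm_Its[OF assms(4), of g]] by simp
  then have "pf g (itm g p) \<le> pf g (itm g p')" by (rule key_le_pf)
  then have "take h (pf g (itm g p)) \<le> take h (pf g (itm g p'))" by (intro list_le_take) auto
  then show ?thesis using take_pf[OF assms(1)] by simp
qed

lemma pf_transfer:
  assumes hg: "h \<le> g" and p: "p \<in> {1..N}"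
  shows "pf h (itm g p) = pf h (itm h p)"
proof -
  define X where "X = (\<lambda>g. map (\<lambda>p. pf h (itm g p)) [1..<Suc N])"
  have sorted: "sorted (X g')" if hg': "h \<le> g'" for g'
  proof -
    have "X g' ! i \<le> X g' ! j" if ij: "i \<le> j" "j < length (X g')" for i j
    proof -
      have jN: "j < N" using ij by (simp add: X_def del: upt_Suc)
      then have "X g' ! i = pf h (itm g' (Suc i))" "X g' ! j = pf h (itm g' (Suc j))"
        using ij by (simp_all add: X_def del: upt_Suc)
      then show ?thesis using pf_itm_mono[OF hg', of "Suc i" "Suc j"] ij jN by simp
    qed
    then show ?thesis by (simp add: sorted_iff_nth_mono)
  qed
  have ms: "mset (X g') = image_mset (pf h) (mset_set Its)" for g'
  proof -
    have inj: "inj_on (itm g') {1..N}"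
      by (rule inj_onI) (metis pos_itm)
    have img: "itm g' ` {1..N} = Its"
    proof
      show "itm g' ` {1..N} \<subseteq> Its" using itm_Its by auto
      show "Its \<subseteq> itm g' ` {1..N}" using pos_range itm_pos by (metis image_eqI subsetI)
    qed
    have "mset (X g') = image_mset (\<lambda>p. pf h (itm g' p)) (mset [1..<Suc N])"
      unfolding X_def by simp
    also have "mset [1..<Suc N] = mset_set {1..N}"
      by (metis atLeastLessThanSuc_atLeastAtMost distinct_upt mset_set_set set_upt)
    also have "image_mset (\<lambda>p. pf h (itm g' p)) (mset_set {1..N}) = image_mset (pf h) (image_mset (itm g') (mset_set {1..N}))"
      by (simp add: multiset.map_comp comp_def)
    also have "image_mset (itm g') (mset_set {1..N}) = mset_set Its"
      using image_mset_mset_set[OF inj] img by simp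
    finally show ?thesis .
  qed
  have "sort (X h) = X g" by (rule properties_for_sort) (use ms sorted[OF hg] in auto)
  moreover have "sort (X h) = X h" using sorted[of h] by (simp add: sorted_sort_id)
  ultimately have "X g = X h" by simp
  then have "X g ! (p - 1) = X h ! (p - 1)" by simp
  moreover have "p - 1 < N" using p by auto
  moreover have "[1..<Suc N] ! (p - 1) = p" using p by (simp del: upt_Suc)
  ultimately show ?thesis using p unfolding X_def by (simp del: upt_Suc)
qed

end



context mctx
begin

section \<open>Generic simulation of one iteration\<close>

definition rk :: "(nat \<Rightarrow> nat) \<Rightarrow> nat \<Rightarrow> nat" where
  "rk Z k = card {i \<in> {1..k}. (Z i = 0) = (Z k = 0)}"
definition rd :: "(nat \<Rightarrow> nat) \<Rightarrow> nat \<Rightarrow> 'a" where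
  "rd Z k = bwt_sel t0 t1 (Z k) (rk Z k)"
definition nc :: "(nat \<Rightarrow> nat) \<Rightarrow> 'a \<Rightarrow> nat \<Rightarrow> nat" where
  "nc Z c k = card {i \<in> {1..k}. rd Z i = c}"
definition jj :: "(nat \<Rightarrow> nat) \<Rightarrow> nat \<Rightarrow> nat" where
  "jj Z k = (if rd Z k \<notin> {d0, d1} then F_init t0 t1 (rd Z k) + nc Z (rd Z k) (k - 1) else Z k + 1)"

primrec idv :: "(nat \<Rightarrow> nat) \<Rightarrow> nat \<Rightarrow> nat \<Rightarrow> int" where
  "idv B H 0 = 0"
| "idv B H (Suc k) = (if B (Suc k) \<noteq> 0 \<and> B (Suc k) \<noteq> H then int (Suc k) else idv B H k)"

primrec lastid :: "(nat \<Rightarrow> nat) \<Rightarrow> (nat \<Rightarrow> nat) \<Rightarrow> nat \<Rightarrow> 'a \<Rightarrow> nat \<Rightarrow> int" where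
  "lastid Z B H c 0 = -1"
| "lastid Z B H c (Suc k) = (if rd Z (Suc k) = c then idv B H (Suc k) else lastid Z B H c k)"

definition ini :: "(nat \<Rightarrow> nat) \<Rightarrow> 'a mstate" where
  "ini B = \<lparr>Zn = (\<lambda>_. 0), Bs = B, Fs = F_init t0 t1, Bid = (\<lambda>_. -1), kk0 = 1, kk1 = 1,
        cid = 0, mlog = []\<rparr>"

definition sst :: "(nat \<Rightarrow> nat) \<Rightarrow> (nat \<Rightarrow> nat) \<Rightarrow> nat \<Rightarrow> nat \<Rightarrow> 'a mstate" where
  "sst Z B H k = foldl (mstep t0 t1 d0 d1 H Z) (ini B) [1..<Suc k]"

lemma run_iter_sst: "run_iter t0 t1 d0 d1 H Z B = sst Z B H N"
  by (simp add: run_iter_def sst_def ini_def N_def)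

lemma sst_0: "sst Z B H 0 = ini B"
  by (simp add: sst_def)

lemma sst_Suc: "sst Z B H (Suc k) = mstep t0 t1 d0 d1 H Z (sst Z B H k) (Suc k)"
  by (simp add: sst_def)

lemma card_Suc_filter:
  "card {i \<in> {1..Suc k}. P i} = card {i \<in> {1..k}. P i} + (if P (Suc k) then 1 else 0)"
proof -
  have e: "{i \<in> {1..Suc k}. P i} = {i \<in> {1..k}. P i} \<union> (if P (Suc k) then {Suc k} else {})"
    by (auto simp: le_Suc_eq)
  show ?thesis unfolding e by (subst card_Un_disjoint) auto
qed

lemma rk_Suc: "rk Z (Suc k) = 1 + card {i \<in> {1..k}. (Z i = 0) = (Z (Suc k) = 0)}"
  unfolding rk_def card_Suc_filter by simp

lemma nc_Suc: "nc Z c (Suc k) = nc Z c k + (if rd Z (Suc k) = c then 1 else 0)"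
  unfolding nc_def by (rule card_Suc_filter)

lemma idv_nonneg: "idv B H k \<ge> 0"
  by (induction k) auto

lemma idv_le: "idv B H k \<le> int k"
  by (induction k) auto

lemma sim:
  assumes H: "H \<noteq> 0" and inj: "inj_on (jj Z) {1..k}"
  shows "kk0 (sst Z B H k) = 1 + card {i \<in> {1..k}. Z i = 0} \<and>
         kk1 (sst Z B H k) = 1 + card {i \<in> {1..k}. Z i \<noteq> 0} \<and>
         (\<forall>c. Fs (sst Z B H k) c = (if c \<in> {d0, d1} then F_init t0 t1 c else F_init t0 t1 c + nc Z c k)) \<and>
         cid (sst Z B H k) = idv B H k \<and>
         (\<forall>c. Bid (sst Z B H k) c = lastid Z B H c k) \<and>
         mlog (sst Z B H k) = map (\<lambda>i. (i, rd Z i, jj Z i)) [1..<Suc k] \<and>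
         (\<forall>i\<in>{1..k}. Zn (sst Z B H k) (jj Z i) = Z i) \<and>
         (\<forall>q. Bs (sst Z B H k) q = (if B q = 0 \<and> (\<exists>i\<in>{1..k}. jj Z i = q \<and>
                  lastid Z B H (rd Z i) (i - 1) \<noteq> idv B H i) then H else B q))"
  using inj
proof (induction k)
  case 0
  show ?case by (simp add: sst_0 ini_def nc_def)
next
  case (Suc k)
  have injk: "inj_on (jj Z) {1..k}" using Suc.prems by (rule inj_on_subset) auto
  note IH = Suc.IH[OF injk]
  define s where "s = sst Z B H k"
  have Bs_s: "\<forall>q. Bs s q = (if B q = 0 \<and> (\<exists>i\<in>{1..k}. jj Z i = q \<and>
                  lastid Z B H (rd Z i) (i - 1) \<noteq> idv B H i) then H else B q)"
    using IH s_def by blast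
  have Bs_cases: "Bs s q = B q \<or> (Bs s q = H \<and> B q = 0)" for q
    using Bs_s by metis
  have idstep: "(Bs s (Suc k) \<noteq> 0 \<and> Bs s (Suc k) \<noteq> H) \<longleftrightarrow> (B (Suc k) \<noteq> 0 \<and> B (Suc k) \<noteq> H)"
    using Bs_cases[of "Suc k"] H by auto
  have idv': "(if Bs s (Suc k) \<noteq> 0 \<and> Bs s (Suc k) \<noteq> H then int (Suc k) else cid s) = idv B H (Suc k)"
    using idstep IH s_def by simp
  have kb: "(if Z (Suc k) = 0 then kk0 s else kk1 s) = rk Z (Suc k)"
    using IH s_def by (simp add: rk_Suc)
  have c: "bwt_sel t0 t1 (Z (Suc k)) (if Z (Suc k) = 0 then kk0 s else kk1 s) = rd Z (Suc k)"
    using kb by (simp add: rd_def)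
  define c0 where "c0 = rd Z (Suc k)"
  define j where "j = jj Z (Suc k)"
  have jdef: "(if c0 \<notin> {d0, d1} then Fs s c0 else Z (Suc k) + 1) = j"
    using IH s_def by (simp add: j_def jj_def c0_def)
  have jnot: "\<forall>i\<in>{1..k}. jj Z i \<noteq> j"
    using Suc.prems unfolding j_def by (auto dest: inj_onD)
  have Bsj: "Bs s j = B j" using Bs_s jnot by auto
  have Bidc: "Bid s c0 = lastid Z B H (rd Z (Suc k)) (Suc k - 1)"
    using IH s_def c0_def by simp
  have step: "sst Z B H (Suc k) = mstep t0 t1 d0 d1 H Z s (Suc k)"
    by (simp add: sst_Suc s_def)
  show ?case
  proof (intro conjI allI ballI)
    show "kk0 (sst Z B H (Suc k)) = 1 + card {i \<in> {1..Suc k}. Z i = 0}"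
      using IH unfolding step s_def card_Suc_filter by (simp add: mstep_def Let_def)
    show "kk1 (sst Z B H (Suc k)) = 1 + card {i \<in> {1..Suc k}. Z i \<noteq> 0}"
      using IH unfolding step s_def card_Suc_filter by (simp add: mstep_def Let_def)
    fix cc
    show "Fs (sst Z B H (Suc k)) cc = (if cc \<in> {d0, d1} then F_init t0 t1 cc else F_init t0 t1 cc + nc Z cc (Suc k))"
      using IH c unfolding step s_def by (auto simp: mstep_def Let_def nc_Suc c0_def)
  next
    show "cid (sst Z B H (Suc k)) = idv B H (Suc k)"
      using idv' unfolding step by (simp add: mstep_def Let_def)
  next
    fix cc
    show "Bid (sst Z B H (Suc k)) cc = lastid Z B H cc (Suc k)"
      using IH c idv' unfolding step s_def by (auto simp: mstep_def Let_def)
  next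
    show "mlog (sst Z B H (Suc k)) = map (\<lambda>i. (i, rd Z i, jj Z i)) [1..<Suc (Suc k)]"
      using IH c jdef unfolding step s_def c0_def j_def by (auto simp: mstep_def Let_def jj_def)
  next
    fix i assume i: "i \<in> {1..Suc k}"
    have Zn': "Zn (sst Z B H (Suc k)) = (Zn s)(j := Z (Suc k))"
      using c jdef unfolding step c0_def by (auto simp: mstep_def Let_def)
    show "Zn (sst Z B H (Suc k)) (jj Z i) = Z i"
    proof (cases "i = Suc k")
      case True then show ?thesis using Zn' j_def by simp
    next
      case False
      then have "i \<in> {1..k}" using i by auto
      then show ?thesis using Zn' jnot IH s_def by auto
    qed
  next
    fix q
    have Bs': "Bs (sst Z B H (Suc k)) = (if Bid s c0 \<noteq> idv B H (Suc k) \<and> Bs s j = 0 then (Bs s)(j := H) else Bs s)"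
      using c jdef idv' unfolding step c0_def by (auto simp: mstep_def Let_def)
    show "Bs (sst Z B H (Suc k)) q = (if B q = 0 \<and> (\<exists>i\<in>{1..Suc k}. jj Z i = q \<and>
                  lastid Z B H (rd Z i) (i - 1) \<noteq> idv B H i) then H else B q)"
    proof (cases "q = j")
      case True
      have ex: "(\<exists>i\<in>{1..Suc k}. jj Z i = q \<and> lastid Z B H (rd Z i) (i - 1) \<noteq> idv B H i)
          \<longleftrightarrow> lastid Z B H (rd Z (Suc k)) (Suc k - 1) \<noteq> idv B H (Suc k)"
      proof
        assume "\<exists>i\<in>{1..Suc k}. jj Z i = q \<and> lastid Z B H (rd Z i) (i - 1) \<noteq> idv B H i"
        then obtain i where i: "i \<in> {1..Suc k}" "jj Z i = q" "lastid Z B H (rd Z i) (i - 1) \<noteq> idv B H i" by blast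
        then have "i = Suc k" using jnot True j_def by (auto simp: le_Suc_eq)
        then show "lastid Z B H (rd Z (Suc k)) (Suc k - 1) \<noteq> idv B H (Suc k)" using i by simp
      next
        assume "lastid Z B H (rd Z (Suc k)) (Suc k - 1) \<noteq> idv B H (Suc k)"
        then show "\<exists>i\<in>{1..Suc k}. jj Z i = q \<and> lastid Z B H (rd Z i) (i - 1) \<noteq> idv B H i"
          using True j_def by (intro bexI[of _ "Suc k"]) auto
      qed
      show ?thesis unfolding Bs' ex using True Bsj Bidc by auto
    next
      case False
      have ex: "(\<exists>i\<in>{1..Suc k}. jj Z i = q \<and> lastid Z B H (rd Z i) (i - 1) \<noteq> idv B H i)
          \<longleftrightarrow> (\<exists>i\<in>{1..k}. jj Z i = q \<and> lastid Z B H (rd Z i) (i - 1) \<noteq> idv B H i)"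
        using False j_def by (auto simp: le_Suc_eq)
      show ?thesis unfolding Bs' ex using False Bs_s by auto
    qed
  qed
qed

end



context mctx
begin

lemma lastid_none: "(\<forall>i\<in>{1..k}. rd Z i \<noteq> c) \<Longrightarrow> lastid Z B H c k = -1"
  by (induction k) auto

lemma lastid_last:
  "k' \<in> {1..k} \<Longrightarrow> rd Z k' = c \<Longrightarrow> (\<forall>i\<in>{k'<..k}. rd Z i \<noteq> c) \<Longrightarrow> lastid Z B H c k = idv B H k'"
proof (induction k)
  case 0 then show ?case by simp
next
  case (Suc k)
  show ?case
  proof (cases "k' = Suc k")
    case True then show ?thesis using Suc.prems by simp
  next
    case False
    then have "k' \<in> {1..k}" using Suc.prems by auto
    moreover have "rd Z (Suc k) \<noteq> c" using Suc.prems False by auto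
    ultimately show ?thesis using Suc by auto
  qed
qed

lemma idv_change:
  "k' \<le> k \<Longrightarrow> (idv B H k' \<noteq> idv B H k \<longleftrightarrow> (\<exists>q\<in>{k'<..k}. B q \<noteq> 0 \<and> B q \<noteq> H))"
proof (induction k)
  case 0 then show ?case by simp
next
  case (Suc k)
  show ?case
  proof (cases "k' = Suc k")
    case True then show ?thesis by simp
  next
    case False
    then have kk: "k' \<le> k" using Suc.prems by simp
    show ?thesis
    proof (cases "B (Suc k) \<noteq> 0 \<and> B (Suc k) \<noteq> H")
      case True
      have "idv B H k' \<le> int k'" by (rule idv_le)
      then have "idv B H k' \<noteq> idv B H (Suc k)" using True kk by simp
      moreover have "\<exists>q\<in>{k'<..Suc k}. B q \<noteq> 0 \<and> B q \<noteq> H" using True kk by (intro bexI[of _ "Suc k"]) auto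
      ultimately show ?thesis by simp
    next
      case False
      then have "idv B H (Suc k) = idv B H k" by (simp only: idv.simps if_False)
      moreover have "(\<exists>q\<in>{k'<..Suc k}. B q \<noteq> 0 \<and> B q \<noteq> H) \<longleftrightarrow> (\<exists>q\<in>{k'<..k}. B q \<noteq> 0 \<and> B q \<noteq> H)"
      proof
        assume "\<exists>q\<in>{k'<..Suc k}. B q \<noteq> 0 \<and> B q \<noteq> H"
        then obtain q where q: "q \<in> {k'<..Suc k}" "B q \<noteq> 0" "B q \<noteq> H" by blast
        then have "q \<noteq> Suc k" using False by auto
        then have "q \<in> {k'<..k}" using q(1) by auto
        then show "\<exists>q\<in>{k'<..k}. B q \<noteq> 0 \<and> B q \<noteq> H" using q by blast
      qed auto
      ultimately show ?thesis using Suc.IH[OF kk] by simp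
    qed
  qed
qed

lemma vt: "t0 \<noteq> []" "t1 \<noteq> []" "last t0 = d0" "last t1 = d1" "d0 < d1"
  "d0 \<notin> set (butlast t0)" "d0 \<notin> set t1" "d1 \<notin> set t0" "d1 \<notin> set (butlast t1)"
  "\<And>x. x \<noteq> d0 \<Longrightarrow> x \<noteq> d1 \<Longrightarrow> d1 < x"
  using valid unfolding valid_texts_def by auto

lemma less_d0: "(\<lambda>x. x < d0) = (\<lambda>_. False)"
  using vt(5,10) by (auto intro!: ext) (metis less_asym less_trans)

lemma less_d1: "(\<lambda>x. x < d1) = (\<lambda>x. x = d0)"
  using vt(5,10) by (auto intro!: ext) (metis less_asym)

lemma mset_W: "mset (W 0) = mset t0" "mset (W 1) = mset t1"
  using mset_bwt vt(1,2) by (auto simp: W_def)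

lemma filter_W: "length (filter P (W 0)) = length (filter P t0)" "length (filter P (W 1)) = length (filter P t1)"
  by (metis mset_W mset_filter size_mset)+

lemma set_W: "set (W 0) = set t0" "set (W 1) = set t1"
  by (metis mset_W set_mset_mset)+

lemma t0_split: "t0 = butlast t0 @ [d0]" using vt(1,3) append_butlast_last_id by metis
lemma t1_split: "t1 = butlast t1 @ [d1]" using vt(2,4) append_butlast_last_id by metis

lemma cnt_d0: "length (filter (\<lambda>x. x = d0) t0) = 1" "length (filter (\<lambda>x. x = d0) t1) = 0"
proof -
  have "filter (\<lambda>x. x = d0) (butlast t0) = []" using vt(6) by (auto simp: filter_empty_conv)
  then show "length (filter (\<lambda>x. x = d0) t0) = 1" by (subst t0_split) simp
  show "length (filter (\<lambda>x. x = d0) t1) = 0" using vt(7) by (auto simp: filter_empty_conv)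
qed

lemma cnt_d1: "length (filter (\<lambda>x. x = d1) t0) = 0" "length (filter (\<lambda>x. x = d1) t1) = 1"
proof -
  have "filter (\<lambda>x. x = d1) (butlast t1) = []" using vt(9) by (auto simp: filter_empty_conv)
  then show "length (filter (\<lambda>x. x = d1) t1) = 1" by (subst t1_split) simp
  show "length (filter (\<lambda>x. x = d1) t0) = 0" using vt(8) by (auto simp: filter_empty_conv)
qed

lemma ch_mem: "x \<in> Its \<Longrightarrow> ch x \<in> set (W (fst x))"
  by (auto simp: Its_def ch_def cw_def len_def)

lemma ch_d0_fst: "x \<in> Its \<Longrightarrow> ch x = d0 \<Longrightarrow> fst x = 0"
  using ch_mem[of x] set_W vt(7) by (auto simp: Its_def less_2_cases_iff)

lemma ch_d1_fst: "x \<in> Its \<Longrightarrow> ch x = d1 \<Longrightarrow> fst x = 1"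
  using ch_mem[of x] set_W vt(8) by (auto simp: Its_def less_2_cases_iff)

lemma card_ch_d0: "card {x \<in> Its. ch x = d0} = 1"
  using card_Its_P[of "\<lambda>x. x = d0"] filter_W cnt_d0 by simp

lemma card_ch_d1: "card {x \<in> Its. ch x = d1} = 1"
  using card_Its_P[of "\<lambda>x. x = d1"] filter_W cnt_d1 by simp

lemma F_init_card: "F_init t0 t1 c = 1 + card {x \<in> Its. ch x < c}"
  using card_Its_P[of "\<lambda>x. x < c"] by (simp add: F_init_def W_def)

lemma F_init_d0: "F_init t0 t1 d0 = 1"
  unfolding F_init_def less_d0 by simp

lemma F_init_d1: "F_init t0 t1 d1 = 2"
  unfolding F_init_def less_d1 using filter_W cnt_d0 by (simp add: W_def)

end



context mctx
begin

abbreviation ZZ :: "nat \<Rightarrow> nat \<Rightarrow> nat" where "ZZ h \<equiv> Zh t0 t1 d0 d1 h"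
abbreviation BB :: "nat \<Rightarrow> nat \<Rightarrow> nat" where "BB h \<equiv> Bh t0 t1 d0 d1 h"

lemma merge_state_eq: "merge_state t0 t1 d0 d1 h = (ZZ h, BB h)"
  by (simp add: Zh_def Bh_def)

lemma Zh_Suc: "ZZ (Suc h) = Zn (sst (ZZ h) (BB h) (Suc h) N)"
  by (simp add: Zh_def[of _ _ _ _ "Suc h"] merge_state_eq run_iter_sst Let_def)

lemma Bh_Suc: "BB (Suc h) = Bs (sst (ZZ h) (BB h) (Suc h) N)"
  by (simp add: Bh_def[of _ _ _ _ "Suc h"] merge_state_eq run_iter_sst Let_def)

lemma iter_log_eq: "iter_log t0 t1 d0 d1 h = mlog (sst (ZZ h) (BB h) (Suc h) N)"
  by (simp add: iter_log_def run_iter_sst)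

lemma key_sf:
  assumes "x \<in> Its" "x' \<in> Its" "fst x' = fst x"
  shows "snd x' \<le> snd x \<Longrightarrow> key h x' \<le> key h x"
    and "snd x' < snd x \<Longrightarrow> key h x' < key h x"
proof -
  obtain b r r' where e: "x = (b, r)" "x' = (b, r')" using assms(3) by (metis prod.collapse)
  show "snd x' \<le> snd x \<Longrightarrow> key h x' \<le> key h x"
    using pf_mono[of b r' r h] assms e by (auto simp: key_def le_less)
  show "snd x' < snd x \<Longrightarrow> key h x' < key h x"
    using pf_mono[of b r' r h] assms e by (auto simp: key_def le_less)
qed

lemma key_sf_le: "x \<in> Its \<Longrightarrow> x' \<in> Its \<Longrightarrow> fst x' = fst x \<Longrightarrow> key h x' \<le> key h x \<longleftrightarrow> snd x' \<le> snd x"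
  using key_sf[of x x' h] key_sf[of x' x h] by (metis leD linorder_le_less_linear)

lemma key_sf_less: "x \<in> Its \<Longrightarrow> x' \<in> Its \<Longrightarrow> fst x' = fst x \<Longrightarrow> key h x' < key h x \<longleftrightarrow> snd x' < snd x"
  using key_sf_le[of x' x h] by (metis leD le_less_linear)

lemma key_Suc_lf: "x \<in> Its \<Longrightarrow> key (Suc h) (lf x) = (ch x # pf h x, fst x, LF (fst x) (snd x))"
  unfolding key_def by (simp only: pf_Suc_lf) (simp add: lf_def)

lemma key_lf_less:
  assumes x: "x \<in> Its" and x': "x' \<in> Its"
  shows "key (Suc h) (lf x') < key (Suc h) (lf x) \<longleftrightarrow> (ch x' < ch x \<or> ch x' = ch x \<and> key h x' < key h x)"
proof -
  have LFe: "ch x' = ch x \<Longrightarrow> fst x' = fst x \<Longrightarrow> LF (fst x') (snd x') < LF (fst x) (snd x) \<longleftrightarrow> snd x' < snd x"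
    using LF_less_iff[of "snd x'" "fst x" "snd x"] x x' by (auto simp: Its_def ch_def)
  show ?thesis
    unfolding key_Suc_lf[OF x] key_Suc_lf[OF x'] unfolding key_def less_prod_def' using LFe by auto
qed

lemma key_lf_le_ch:
  assumes "x \<in> Its" "x' \<in> Its" "key (Suc h) (lf x') \<le> key (Suc h) (lf x)"
  shows "ch x' \<le> ch x"
proof -
  have "pf (Suc h) (lf x') \<le> pf (Suc h) (lf x)" using assms(3) by (rule key_le_pf)
  then show ?thesis using pf_Suc_lf assms(1,2) by (auto simp: less_imp_le)
qed

lemma pos_lf:
  assumes x: "x \<in> Its"
  shows "pos (Suc h) (lf x) = F_init t0 t1 (ch x) + card {x' \<in> Its. ch x' = ch x \<and> key h x' < key h x}"
proof -
  define S where "S = {x' \<in> Its. key (Suc h) (lf x') < key (Suc h) (lf x)}"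
  define A where "A = {x' \<in> Its. ch x' < ch x}"
  define B where "B = {x' \<in> Its. ch x' = ch x \<and> key h x' < key h x}"
  have e1: "{y \<in> Its. key (Suc h) y < key (Suc h) (lf x)} = lf ` S"
  proof (rule set_eqI, rule iffI)
    fix y assume y: "y \<in> {y \<in> Its. key (Suc h) y < key (Suc h) (lf x)}"
    then obtain x' where "x' \<in> Its" "y = lf x'" using lf_surj by blast
    then show "y \<in> lf ` S" using y unfolding S_def by blast
  next
    fix y assume "y \<in> lf ` S"
    then show "y \<in> {y \<in> Its. key (Suc h) y < key (Suc h) (lf x)}" unfolding S_def using lf_Its by blast
  qed
  have e2: "card (lf ` S) = card S"
    by (rule card_image) (rule inj_on_subset[OF lf_inj], simp add: S_def)
  have e3: "S = A \<union> B"
    unfolding S_def A_def B_def using key_lf_less[OF x] by blast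
  have e4: "card (A \<union> B) = card A + card B"
    by (rule card_Un_disjoint) (auto simp: A_def B_def)
  have "pos (Suc h) (lf x) = 1 + card S"
    unfolding pos_def e1 e2 by simp
  also have "\<dots> = 1 + card A + card B" using e3 e4 by simp
  finally have "pos (Suc h) (lf x) = 1 + card A + card B" .
  then show ?thesis unfolding F_init_card A_def B_def by simp
qed

definition INV :: "nat \<Rightarrow> bool" where
  "INV h \<longleftrightarrow> (\<forall>x\<in>Its. ZZ h (pos h x) = fst x) \<and> BB h 1 \<noteq> 0 \<and> BB h (Suc N) \<noteq> 0 \<and>
     (\<forall>q\<in>{2..N}. BB h q \<le> h \<and> (BB h q \<noteq> 0 \<longleftrightarrow> pf h (itm h (q - 1)) \<noteq> pf h (itm h q)))"

lemma INV_0: "INV 0"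
proof -
  have Z0: "ZZ 0 p = (if p \<le> length t0 then 0 else 1)" for p by (simp add: Zh_def)
  have B0: "BB 0 p = (if p = 1 \<or> p = N + 1 then 1 else 0)" for p by (simp add: Bh_def N_def)
  have "ZZ 0 (pos 0 x) = fst x" if x: "x \<in> Its" for x
  proof (cases "fst x = 0")
    case True
    have "{z \<in> Its. key 0 z < key 0 x} \<subseteq> {0} \<times> {1..<snd x}"
      using True x by (auto simp: key_def Its_def less_prod_def' less_2_cases_iff)
    then have "card {z \<in> Its. key 0 z < key 0 x} \<le> card ({0::nat} \<times> {1..<snd x})" by (intro card_mono) auto
    moreover have "snd x \<ge> 1" using x by (simp add: Its_def)
    ultimately have "pos 0 x \<le> snd x" unfolding pos_def by (simp add: card_cartesian_product)
    moreover have "snd x \<le> length t0" using x True len0 by (auto simp: Its_def)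
    ultimately show ?thesis using True Z0 by simp
  next
    case False
    then have f1: "fst x = 1" using x by (auto simp: Its_def)
    have "{0} \<times> {1..len 0} \<subseteq> {z \<in> Its. key 0 z < key 0 x}"
      using f1 by (auto simp: key_def Its_def less_prod_def')
    then have "card ({0::nat} \<times> {1..len 0}) \<le> card {z \<in> Its. key 0 z < key 0 x}" by (intro card_mono) auto
    then have "pos 0 x > length t0" unfolding pos_def by (simp add: card_cartesian_product len0)
    then show ?thesis using f1 Z0 by simp
  qed
  moreover have "BB 0 1 \<noteq> 0" "BB 0 (Suc N) \<noteq> 0" using B0 by auto
  moreover have "\<forall>q\<in>{2..N}. BB 0 q \<le> 0 \<and> (BB 0 q \<noteq> 0 \<longleftrightarrow> pf 0 (itm 0 (q - 1)) \<noteq> pf 0 (itm 0 q))"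
    using B0 by auto
  ultimately show ?thesis unfolding INV_def by blast
qed

end



context mctx
begin

context
  fixes h :: nat
  assumes invh: "INV h"
begin

lemma Zk: "k \<in> {1..N} \<Longrightarrow> ZZ h k = fst (itm h k)"
  using invh itm_Its pos_itm unfolding INV_def by metis

lemma Bk: "q \<in> {2..N} \<Longrightarrow> BB h q \<le> h \<and> (BB h q \<noteq> 0 \<longleftrightarrow> pf h (itm h (q - 1)) \<noteq> pf h (itm h q))"
  using invh unfolding INV_def by blast

lemma fst_lt2: "x \<in> Its \<Longrightarrow> fst x < 2" by (simp add: Its_def)

lemma rk_itm:
  assumes k: "k \<in> {1..N}"
  shows "rk (ZZ h) k = snd (itm h k)"
proof -
  define x where "x = itm h k"
  have x: "x \<in> Its" "pos h x = k" using k itm_Its pos_itm unfolding x_def by auto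
  have eq: "{i \<in> {1..k}. (ZZ h i = 0) = (ZZ h k = 0)} = pos h ` {x' \<in> Its. fst x' = fst x \<and> snd x' \<le> snd x}"
  proof (rule set_eqI, rule iffI)
    fix i assume i: "i \<in> {i \<in> {1..k}. (ZZ h i = 0) = (ZZ h k = 0)}"
    then have iN: "i \<in> {1..N}" using k by auto
    define x' where "x' = itm h i"
    have x': "x' \<in> Its" "pos h x' = i" using iN itm_Its pos_itm unfolding x'_def by auto
    have "(fst x' = 0) = (fst x = 0)" using i Zk[OF iN] Zk[OF k] unfolding x'_def x_def by simp
    then have f: "fst x' = fst x" using fst_lt2[OF x'(1)] fst_lt2[OF x(1)] by linarith
    have "pos h x' \<le> pos h x" using x x' i by simp
    then have "key h x' \<le> key h x" using pos_le x x' by blast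
    then have "snd x' \<le> snd x" using key_sf_le[OF x(1) x'(1) f] by simp
    then show "i \<in> pos h ` {x' \<in> Its. fst x' = fst x \<and> snd x' \<le> snd x}" using x' f by force
  next
    fix i assume "i \<in> pos h ` {x' \<in> Its. fst x' = fst x \<and> snd x' \<le> snd x}"
    then obtain x' where x': "x' \<in> Its" "fst x' = fst x" "snd x' \<le> snd x" "i = pos h x'" by blast
    have "key h x' \<le> key h x" using key_sf_le[OF x(1) x'(1,2)] x'(3) by simp
    then have "pos h x' \<le> k" using pos_le x x'(1) by metis
    moreover have "pos h x' \<in> {1..N}" using pos_range x'(1) by blast
    moreover have "ZZ h (pos h x') = fst x'" using invh x'(1) unfolding INV_def by blast
    moreover have "ZZ h k = fst x" using invh x unfolding INV_def by blast
    ultimately show "i \<in> {i \<in> {1..k}. (ZZ h i = 0) = (ZZ h k = 0)}" using x' by auto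
  qed
  have c1: "card (pos h ` {x' \<in> Its. fst x' = fst x \<and> snd x' \<le> snd x}) = card {x' \<in> Its. fst x' = fst x \<and> snd x' \<le> snd x}"
    by (rule card_image) (rule inj_on_subset[OF pos_inj], auto)
  have "{x' \<in> Its. fst x' = fst x \<and> snd x' \<le> snd x} = {fst x} \<times> {1..snd x}"
    using x(1) by (auto simp: Its_def)
  then have c2: "card {x' \<in> Its. fst x' = fst x \<and> snd x' \<le> snd x} = snd x"
    by (simp add: card_cartesian_product)
  have "rk (ZZ h) k = snd x" unfolding rk_def eq c1 c2 by (rule refl)
  then show ?thesis by (simp add: x_def)
qed

lemma rd_itm: "k \<in> {1..N} \<Longrightarrow> rd (ZZ h) k = ch (itm h k)"
  unfolding rd_def ch_bwt_sel using Zk rk_itm by simp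

lemma nc_itm:
  assumes k: "k \<in> {1..N}"
  shows "nc (ZZ h) c (k - 1) = card {x' \<in> Its. ch x' = c \<and> key h x' < key h (itm h k)}"
proof -
  define x where "x = itm h k"
  have x: "x \<in> Its" "pos h x = k" using k itm_Its pos_itm unfolding x_def by auto
  have eq: "{i \<in> {1..k - 1}. rd (ZZ h) i = c} = pos h ` {x' \<in> Its. ch x' = c \<and> key h x' < key h x}"
  proof (rule set_eqI, rule iffI)
    fix i assume i: "i \<in> {i \<in> {1..k - 1}. rd (ZZ h) i = c}"
    then have iN: "i \<in> {1..N}" using k by auto
    define x' where "x' = itm h i"
    have x': "x' \<in> Its" "pos h x' = i" using iN itm_Its pos_itm unfolding x'_def by auto
    have "ch x' = c" using i rd_itm[OF iN] unfolding x'_def by simp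
    moreover have "pos h x' < pos h x" using x x' i by auto
    then have "key h x' < key h x" using pos_less x x' by blast
    ultimately show "i \<in> pos h ` {x' \<in> Its. ch x' = c \<and> key h x' < key h x}" using x' by force
  next
    fix i assume "i \<in> pos h ` {x' \<in> Its. ch x' = c \<and> key h x' < key h x}"
    then obtain x' where x': "x' \<in> Its" "ch x' = c" "key h x' < key h x" "i = pos h x'" by blast
    have "pos h x' < k" using pos_less x x'(1,3) by metis
    moreover have pN: "pos h x' \<in> {1..N}" using pos_range x'(1) by blast
    moreover have "rd (ZZ h) (pos h x') = c" using rd_itm[OF pN] itm_pos[OF x'(1)] x'(2) by simp
    ultimately show "i \<in> {i \<in> {1..k - 1}. rd (ZZ h) i = c}" using x' by auto
  qed
  have c1: "card (pos h ` {x' \<in> Its. ch x' = c \<and> key h x' < key h x}) = card {x' \<in> Its. ch x' = c \<and> key h x' < key h x}"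
    by (rule card_image) (rule inj_on_subset[OF pos_inj], auto)
  have "nc (ZZ h) c (k - 1) = card {x' \<in> Its. ch x' = c \<and> key h x' < key h x}" unfolding nc_def eq c1 by (rule refl)
  then show ?thesis by (simp add: x_def)
qed

lemma no_smaller_same_d:
  assumes x: "x \<in> Its" and c: "ch x = d0 \<or> ch x = d1"
  shows "card {x' \<in> Its. ch x' = ch x \<and> key h x' < key h x} = 0"
proof -
  have "card {x' \<in> Its. ch x' = ch x} = 1" using c card_ch_d0 card_ch_d1 by auto
  then obtain z where z: "{x' \<in> Its. ch x' = ch x} = {z}" by (metis card_1_singletonE)
  moreover have "x \<in> {x' \<in> Its. ch x' = ch x}" using x by simp
  ultimately have "z = x" by simp
  then have "{x' \<in> Its. ch x' = ch x \<and> key h x' < key h x} = {}" using z by auto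
  then show ?thesis by simp
qed

lemma jj_itm:
  assumes k: "k \<in> {1..N}"
  shows "jj (ZZ h) k = pos (Suc h) (lf (itm h k))"
proof -
  define x where "x = itm h k"
  have x: "x \<in> Its" "pos h x = k" using k itm_Its pos_itm unfolding x_def by auto
  have p: "pos (Suc h) (lf x) = F_init t0 t1 (ch x) + nc (ZZ h) (ch x) (k - 1)"
    using pos_lf[OF x(1)] nc_itm[OF k] unfolding x_def by simp
  have r: "rd (ZZ h) k = ch x" using rd_itm[OF k] x_def by simp
  show ?thesis
  proof (cases "ch x \<in> {d0, d1}")
    case False then show ?thesis using p r unfolding jj_def x_def by simp
  next
    case True
    have z: "card {x' \<in> Its. ch x' = ch x \<and> key h x' < key h x} = 0"
      using no_smaller_same_d[OF x(1)] True by auto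
    have "pos (Suc h) (lf x) = F_init t0 t1 (ch x)" using pos_lf[OF x(1)] z by simp
    moreover have "ZZ h k = fst x" using Zk[OF k] x_def by simp
    ultimately show ?thesis
      using True r ch_d0_fst[OF x(1)] ch_d1_fst[OF x(1)] F_init_d0 F_init_d1 unfolding jj_def x_def
      by auto
  qed
qed

lemma itm_bij: "bij_betw (itm g) {1..N} Its"
  unfolding itm_def using pos_bij by (rule bij_betw_inv_into)

lemma jj_bij: "bij_betw (jj (ZZ h)) {1..N} {1..N}"
proof -
  have "bij_betw (pos (Suc h) \<circ> lf \<circ> itm h) {1..N} {1..N}"
    using bij_betw_trans[OF itm_bij bij_betw_trans[OF lf_bij pos_bij]] by (simp add: o_assoc)
  then show ?thesis
    by (rule bij_betw_cong[THEN iffD1, rotated]) (simp add: jj_itm)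
qed

lemma jj_inj: "inj_on (jj (ZZ h)) {1..N}"
  using jj_bij bij_betw_def by blast

lemmas simN = sim[where H="Suc h" and B="BB h" and k=N and Z="ZZ h", OF Suc_not_Zero jj_inj]
lemmas simLog = simN[THEN conjunct2, THEN conjunct2, THEN conjunct2, THEN conjunct2, THEN conjunct2, THEN conjunct1]
lemmas simZ = simN[THEN conjunct2, THEN conjunct2, THEN conjunct2, THEN conjunct2, THEN conjunct2, THEN conjunct2, THEN conjunct1]
lemmas simB = simN[THEN conjunct2, THEN conjunct2, THEN conjunct2, THEN conjunct2, THEN conjunct2, THEN conjunct2, THEN conjunct2]

lemma Z_Suc: "x \<in> Its \<Longrightarrow> ZZ (Suc h) (pos (Suc h) (lf x)) = fst x"
proof -
  assume x: "x \<in> Its"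
  have k: "pos h x \<in> {1..N}" using pos_range x by blast
  have "Zn (sst (ZZ h) (BB h) (Suc h) N) (jj (ZZ h) (pos h x)) = ZZ h (pos h x)"
    using simZ k by blast
  then show ?thesis using Zh_Suc jj_itm[OF k] itm_pos[OF x] Zk[OF k] by simp
qed

lemma B_Suc_eq:
  "BB (Suc h) q = (if BB h q = 0 \<and> (\<exists>i\<in>{1..N}. jj (ZZ h) i = q \<and>
      lastid (ZZ h) (BB h) (Suc h) (rd (ZZ h) i) (i - 1) \<noteq> idv (BB h) (Suc h) i) then Suc h else BB h q)"
  unfolding Bh_Suc using simB by (rule spec)

lemma log_eq: "iter_log t0 t1 d0 d1 h = map (\<lambda>i. (i, rd (ZZ h) i, jj (ZZ h) i)) [1..<Suc N]"
  unfolding iter_log_eq by (rule simLog)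


lemma between:
  assumes q: "q \<in> {2..N}" and x'': "x'' \<in> Its"
  shows "\<not> (key (Suc h) (itm (Suc h) (q - 1)) < key (Suc h) x'' \<and> key (Suc h) x'' < key (Suc h) (itm (Suc h) q))"
proof
  assume a: "key (Suc h) (itm (Suc h) (q - 1)) < key (Suc h) x'' \<and> key (Suc h) x'' < key (Suc h) (itm (Suc h) q)"
  have q1: "q - 1 \<in> {1..N}" "q \<in> {1..N}" using q by auto
  have "pos (Suc h) (itm (Suc h) (q - 1)) < pos (Suc h) x''" "pos (Suc h) x'' < pos (Suc h) (itm (Suc h) q)"
    using a pos_less itm_Its q1 x'' by blast+
  then show False using pos_itm q1 by simp
qed

lemma INV_Suc: "INV (Suc h)"
proof -
  have Zpart: "\<forall>y\<in>Its. ZZ (Suc h) (pos (Suc h) y) = fst y"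
  proof
    fix y assume "y \<in> Its"
    then obtain x where "x \<in> Its" "y = lf x" using lf_surj by blast
    then show "ZZ (Suc h) (pos (Suc h) y) = fst y" using Z_Suc by simp
  qed
  have B1: "BB (Suc h) 1 \<noteq> 0" "BB (Suc h) (Suc N) \<noteq> 0"
    using invh B_Suc_eq[of 1] B_Suc_eq[of "Suc N"] unfolding INV_def by auto
  have B2: "BB (Suc h) q \<le> Suc h \<and> (BB (Suc h) q \<noteq> 0 \<longleftrightarrow> pf (Suc h) (itm (Suc h) (q - 1)) \<noteq> pf (Suc h) (itm (Suc h) q))"
    if q: "q \<in> {2..N}" for q
  proof
    show "BB (Suc h) q \<le> Suc h" using B_Suc_eq[of q] Bk[OF q] by auto
  next
    have q1: "q - 1 \<in> {1..N}" "q \<in> {1..N}" using q by auto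
    define y where "y = itm (Suc h) q"
    define y' where "y' = itm (Suc h) (q - 1)"
    have yI: "y \<in> Its" "y' \<in> Its" using itm_Its q1 unfolding y_def y'_def by auto
    obtain x where x: "x \<in> Its" "y = lf x" using lf_surj yI by blast
    obtain x' where x': "x' \<in> Its" "y' = lf x'" using lf_surj yI by blast
    define k where "k = pos h x"
    define k' where "k' = pos h x'"
    have kN: "k \<in> {1..N}" "k' \<in> {1..N}" using pos_range x x' unfolding k_def k'_def by auto
    have ik: "itm h k = x" "itm h k' = x'" using itm_pos x x' unfolding k_def k'_def by auto
    have jk: "jj (ZZ h) k = q" using jj_itm[OF kN(1)] ik x(2) pos_itm[OF q1(2), of "Suc h"] y_def by simp
    have rk': "rd (ZZ h) k = ch x" "rd (ZZ h) k' = ch x'" using rd_itm kN ik by auto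
    have uniq: "(\<exists>i\<in>{1..N}. jj (ZZ h) i = q \<and> P i) \<longleftrightarrow> P k" for P
      using jk kN jj_inj by (auto dest: inj_onD)
    have Bnew: "BB (Suc h) q \<noteq> 0 \<longleftrightarrow> BB h q \<noteq> 0 \<or> lastid (ZZ h) (BB h) (Suc h) (ch x) (k - 1) \<noteq> idv (BB h) (Suc h) k"
      using B_Suc_eq[of q] uniq[of "\<lambda>i. lastid (ZZ h) (BB h) (Suc h) (rd (ZZ h) i) (i - 1) \<noteq> idv (BB h) (Suc h) i"] rk'
      by auto
    have pfy: "pf (Suc h) y = ch x # pf h x" "pf (Suc h) y' = ch x' # pf h x'"
      using pf_Suc_lf x x' by auto
    have ylt: "key (Suc h) y' < key (Suc h) y"
      using pos_less[OF yI(2) yI(1), of "Suc h"] pos_itm[OF q1(1), of "Suc h"] pos_itm[OF q1(2), of "Suc h"] q1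
      unfolding y_def y'_def by simp
    then have cases: "ch x' < ch x \<or> ch x' = ch x \<and> key h x' < key h x"
      using key_lf_less[OF x(1) x'(1)] x x' by simp
    have main: "BB (Suc h) q \<noteq> 0 \<longleftrightarrow> ch x' # pf h x' \<noteq> ch x # pf h x"
      using cases
    proof
      assume lt: "ch x' < ch x"
      have none: "\<forall>i\<in>{1..k - 1}. rd (ZZ h) i \<noteq> ch x"
      proof (intro ballI notI)
        fix i assume i: "i \<in> {1..k - 1}" and ri: "rd (ZZ h) i = ch x"
        have iN: "i \<in> {1..N}" using i kN by auto
        define x'' where "x'' = itm h i"
        have x'': "x'' \<in> Its" "pos h x'' = i" using itm_Its pos_itm iN unfolding x''_def by auto
        have cx: "ch x'' = ch x" using rd_itm[OF iN] ri x''_def by simp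
        have "pos h x'' < pos h x" using x'' i k_def by auto
        then have "key h x'' < key h x" using pos_less x x'' by blast
        then have "key (Suc h) (lf x'') < key (Suc h) y" using key_lf_less[OF x(1) x''(1)] cx x by simp
        then have "\<not> key (Suc h) y' < key (Suc h) (lf x'')"
          using between[OF q lf_Its[OF x''(1)]] unfolding y_def y'_def by blast
        then have "key (Suc h) (lf x'') \<le> key (Suc h) (lf x')" using x' by auto
        then have "ch x'' \<le> ch x'" using key_lf_le_ch[OF x'(1) x''(1)] by simp
        then show False using cx lt by simp
      qed
      have "lastid (ZZ h) (BB h) (Suc h) (ch x) (k - 1) = -1" by (rule lastid_none[OF none])
      moreover have "idv (BB h) (Suc h) k \<ge> 0" by (rule idv_nonneg)
      ultimately show ?thesis using Bnew lt by auto
    next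
      assume eqc: "ch x' = ch x \<and> key h x' < key h x"
      then have kk: "k' < k" using pos_less x x' unfolding k_def k'_def by blast
      have none: "\<forall>i\<in>{k'<..k - 1}. rd (ZZ h) i \<noteq> ch x"
      proof (intro ballI notI)
        fix i assume i: "i \<in> {k'<..k - 1}" and ri: "rd (ZZ h) i = ch x"
        have iN: "i \<in> {1..N}" using i kN by auto
        define x'' where "x'' = itm h i"
        have x'': "x'' \<in> Its" "pos h x'' = i" using itm_Its pos_itm iN unfolding x''_def by auto
        have cx: "ch x'' = ch x" using rd_itm[OF iN] ri x''_def by simp
        have "pos h x'' < pos h x" "pos h x' < pos h x''" using x'' i k_def k'_def by auto
        then have "key h x'' < key h x" "key h x' < key h x''" using pos_less x x' x'' by blast+
        then have "key (Suc h) (lf x'') < key (Suc h) y" "key (Suc h) y' < key (Suc h) (lf x'')"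
          using key_lf_less[OF x(1) x''(1)] key_lf_less[OF x''(1) x'(1)] cx eqc x x' by auto
        then show False using between[OF q lf_Its[OF x''(1)]] unfolding y_def y'_def by blast
      qed
      have li: "lastid (ZZ h) (BB h) (Suc h) (ch x) (k - 1) = idv (BB h) (Suc h) k'"
        using lastid_last[of k' "k - 1" "ZZ h" "ch x"] kk kN rk' eqc none by auto
      have ic: "idv (BB h) (Suc h) k' \<noteq> idv (BB h) (Suc h) k \<longleftrightarrow> (\<exists>p\<in>{k'<..k}. BB h p \<noteq> 0 \<and> BB h p \<noteq> Suc h)"
        using idv_change kk by simp
      also have "\<dots> \<longleftrightarrow> (\<exists>p\<in>{k'<..k}. pf h (itm h (p - 1)) \<noteq> pf h (itm h p))"
      proof -
        have "p \<in> {k'<..k} \<Longrightarrow> (BB h p \<noteq> 0 \<and> BB h p \<noteq> Suc h) \<longleftrightarrow> pf h (itm h (p - 1)) \<noteq> pf h (itm h p)" for p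
        proof -
          assume p: "p \<in> {k'<..k}"
          then have "p \<in> {2..N}" using kN kk by auto
          then show ?thesis using Bk by fastforce
        qed
        then show ?thesis by blast
      qed
      also have "\<dots> \<longleftrightarrow> pf h (itm h k') \<noteq> pf h (itm h k)"
        by (rule adj_change) (use kN kk in \<open>auto intro!: pf_itm_mono\<close>)
      finally have ic': "idv (BB h) (Suc h) k' \<noteq> idv (BB h) (Suc h) k \<longleftrightarrow> pf h x' \<noteq> pf h x"
        using ik by simp
      have Bq: "BB h q \<noteq> 0 \<Longrightarrow> pf h x' \<noteq> pf h x"
      proof -
        assume "BB h q \<noteq> 0"
        then have "pf h (itm h (q - 1)) \<noteq> pf h (itm h q)" using Bk[OF q] by blast
        then have "pf h y' \<noteq> pf h y" using pf_transfer[of h "Suc h"] q1 unfolding y_def y'_def by simp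
        then have "pf (Suc h) y' \<noteq> pf (Suc h) y" using take_pf[of h "Suc h"] by (metis le_SucI order_refl)
        then show "pf h x' \<noteq> pf h x" using pfy eqc by simp
      qed
      show ?thesis using Bnew li ic' Bq eqc by auto
    qed
    show "BB (Suc h) q \<noteq> 0 \<longleftrightarrow> pf (Suc h) (itm (Suc h) (q - 1)) \<noteq> pf (Suc h) (itm (Suc h) q)"
      using main pfy unfolding y_def y'_def by (simp only:)
  qed
  show ?thesis unfolding INV_def using Zpart B1 B2 by blast
qed

end

end



context mctx
begin

lemma INV_all: "INV h"
  by (induction h) (auto intro: INV_0 INV_Suc)

lemma main:
  assumes blk: "is_block (BB h) (length t0 + length t1) l m" and mono: "monochrome (ZZ h) l m"
  shows "(\<forall>g > h. \<forall>i \<in> {l..m}. ZZ g i = ZZ h i) \<and>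
         (\<forall>c. let J = {j. \<exists>k \<in> {l..m}. (k, c, j) \<in> set (iter_log t0 t1 d0 d1 h)}
              in J \<noteq> {} \<longrightarrow>
                 (\<exists>l' m'. J = {l'..m'} \<and>
                    is_block (BB (Suc h)) (length t0 + length t1) l' m' \<and>
                    monochrome (ZZ (Suc h)) l' m'))"
proof -
  have invh: "INV h" and invS: "INV (Suc h)" by (rule INV_all)+
  have lm: "1 \<le> l" "l \<le> m" "m \<le> N" "BB h l \<noteq> 0" "\<And>i. l < i \<Longrightarrow> i \<le> m \<Longrightarrow> BB h i = 0" "BB h (m + 1) \<noteq> 0"
    using blk unfolding is_block_def N_def by auto
  define P where "P = (\<lambda>p. pf h (itm h p))"
  define w where "w = P l"
  have Pmono: "p \<le> p' \<Longrightarrow> p \<in> {1..N} \<Longrightarrow> p' \<in> {1..N} \<Longrightarrow> P p \<le> P p'" for p p'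
    unfolding P_def by (rule pf_itm_mono) auto
  have inblk: "P p = w" if p: "p \<in> {l..m}" for p
  proof -
    have "\<not> (\<exists>q\<in>{l<..p}. P (q - 1) \<noteq> P q)"
    proof
      assume "\<exists>q\<in>{l<..p}. P (q - 1) \<noteq> P q"
      then obtain q where q: "q \<in> {l<..p}" "P (q - 1) \<noteq> P q" by blast
      then have "q \<in> {2..N}" using p lm by auto
      moreover have "BB h q = 0" using lm(5) q p by auto
      ultimately show False using Bk[OF invh] q(2) unfolding P_def by blast
    qed
    moreover have "(\<exists>q\<in>{l<..p}. P (q - 1) \<noteq> P q) \<longleftrightarrow> P l \<noteq> P p"
      by (rule adj_change) (use p lm in \<open>auto intro!: Pmono\<close>)
    ultimately show ?thesis unfolding w_def by simp
  qed
  have onlyblk: "p \<in> {l..m}" if p: "p \<in> {1..N}" "P p = w" for p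
  proof (rule ccontr)
    assume "p \<notin> {l..m}"
    then have "p < l \<or> m < p" by auto
    then show False
    proof
      assume pl: "p < l"
      then have l2: "l \<in> {2..N}" using p lm by auto
      then have ne: "P (l - 1) \<noteq> P l" using Bk[OF invh l2] lm(4) unfolding P_def by blast
      have "P p \<le> P (l - 1)" "P (l - 1) \<le> P l" using pl p lm by (auto intro!: Pmono)
      then show False using ne p(2) w_def by (metis order_antisym)
    next
      assume mp: "m < p"
      then have m2: "m + 1 \<in> {2..N}" using p lm by auto
      then have ne: "P m \<noteq> P (m + 1)" using Bk[OF invh m2] lm(6) unfolding P_def by auto
      have "P m \<le> P (m + 1)" "P (m + 1) \<le> P p" using mp p lm by (auto intro!: Pmono)
      moreover have "P m = w" using inblk lm by auto
      ultimately show False using ne p(2) by (metis order_antisym)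
    qed
  qed
  define b0 where "b0 = ZZ h l"
  have allb0: "ZZ h p = b0" if "p \<in> {l..m}" for p
    using mono that lm unfolding monochrome_def b0_def by auto
  have b01: "b0 = 0 \<or> b0 = 1" using mono lm unfolding monochrome_def b0_def by auto
  have part1: "\<forall>g > h. \<forall>i \<in> {l..m}. ZZ g i = ZZ h i"
  proof (intro allI impI ballI)
    fix g i assume g: "h < g" and i: "i \<in> {l..m}"
    have iN: "i \<in> {1..N}" using i lm by auto
    define y where "y = itm g i"
    have y: "y \<in> Its" using itm_Its iN y_def by simp
    define p' where "p' = pos h y"
    have p'N: "p' \<in> {1..N}" using pos_range y p'_def by simp
    have ip: "itm h p' = y" using itm_pos y p'_def by simp
    have "P p' = pf h (itm g i)" using ip y_def P_def by simp
    also have "\<dots> = pf h (itm h i)" using pf_transfer[of h g i] g iN by simp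
    also have "\<dots> = w" using inblk i P_def by simp
    finally have "p' \<in> {l..m}" using onlyblk p'N by simp
    then have "ZZ h p' = b0" by (rule allb0)
    moreover have "ZZ h p' = fst y" using Zk[OF invh p'N] ip by simp
    moreover have "ZZ g i = fst y" using Zk[OF INV_all iN] y_def by simp
    ultimately show "ZZ g i = ZZ h i" using allb0[OF i] by simp
  qed
  have part2: "J \<noteq> {} \<longrightarrow> (\<exists>l' m'. J = {l'..m'} \<and>
                    is_block (BB (Suc h)) (length t0 + length t1) l' m' \<and>
                    monochrome (ZZ (Suc h)) l' m')"
    if Jd: "J = {j. \<exists>k \<in> {l..m}. (k, c, j) \<in> set (iter_log t0 t1 d0 d1 h)}" for J c
  proof
    assume Jne: "J \<noteq> {}"
    define Q where "Q = (\<lambda>p. pf (Suc h) (itm (Suc h) p))"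
    have Qmono: "p \<le> p' \<Longrightarrow> p \<in> {1..N} \<Longrightarrow> p' \<in> {1..N} \<Longrightarrow> Q p \<le> Q p'" for p p'
      unfolding Q_def by (rule pf_itm_mono) auto
    have J1: "J = {j. \<exists>k \<in> {l..m}. rd (ZZ h) k = c \<and> j = jj (ZZ h) k}"
    proof -
      have mem: "(k, c, j) \<in> set (map (\<lambda>i. (i, rd (ZZ h) i, jj (ZZ h) i)) [1..<Suc N]) \<longleftrightarrow>
          k \<in> {1..N} \<and> c = rd (ZZ h) k \<and> j = jj (ZZ h) k" for k j
        by (auto simp del: upt_Suc)
      show ?thesis unfolding Jd log_eq[OF invh] mem using lm by auto
    qed
    have Jchar: "J = {p \<in> {1..N}. Q p = c # w}"
    proof (rule set_eqI, rule iffI)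
      fix j assume "j \<in> J"
      then obtain k where k: "k \<in> {l..m}" "rd (ZZ h) k = c" "j = jj (ZZ h) k" using J1 by blast
      have kN: "k \<in> {1..N}" using k lm by auto
      define x where "x = itm h k"
      have x: "x \<in> Its" using itm_Its kN x_def by simp
      have j: "j = pos (Suc h) (lf x)" using jj_itm[OF invh kN] k x_def by simp
      have jN: "j \<in> {1..N}" using pos_range lf_Its[OF x] j by simp
      have "Q j = pf (Suc h) (lf x)" using itm_pos[OF lf_Its[OF x]] j Q_def by simp
      also have "\<dots> = ch x # pf h x" using pf_Suc_lf[OF x] .
      also have "\<dots> = c # w" using k rd_itm[OF invh kN] inblk[OF k(1)] x_def P_def by simp
      finally show "j \<in> {p \<in> {1..N}. Q p = c # w}" using jN by simp
    next
      fix p assume p: "p \<in> {p \<in> {1..N}. Q p = c # w}"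
      define y where "y = itm (Suc h) p"
      have y: "y \<in> Its" using itm_Its p y_def by simp
      obtain x where x: "x \<in> Its" "y = lf x" using lf_surj y by blast
      have "ch x # pf h x = c # w" using p pf_Suc_lf[OF x(1)] x(2) y_def Q_def by simp
      then have cx: "ch x = c" "pf h x = w" by auto
      define k where "k = pos h x"
      have kN: "k \<in> {1..N}" using pos_range x k_def by simp
      have ik: "itm h k = x" using itm_pos x k_def by simp
      have kb: "k \<in> {l..m}" using onlyblk[OF kN] ik cx P_def by simp
      have "rd (ZZ h) k = c" using rd_itm[OF invh kN] ik cx by simp
      moreover have "jj (ZZ h) k = p"
      proof -
        have pN: "p \<in> {1..N}" using p by simp
        show ?thesis using jj_itm[OF invh kN] ik x(2) y_def pos_itm[OF pN, of "Suc h"] by simp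
      qed
      ultimately show "p \<in> J" using J1 kb by blast
    qed
    have finJ: "finite J" using Jchar by simp
    define l' where "l' = Min J"
    define m' where "m' = Max J"
    have l'J: "l' \<in> J" and m'J: "m' \<in> J" using finJ Jne l'_def m'_def by auto
    have lmJ: "\<And>p. p \<in> J \<Longrightarrow> l' \<le> p \<and> p \<le> m'" using finJ l'_def m'_def by auto
    have l'N: "l' \<in> {1..N}" "m' \<in> {1..N}" using l'J m'J Jchar by auto
    have JI: "J = {l'..m'}"
    proof (rule set_eqI, rule iffI)
      fix p assume "p \<in> J" then show "p \<in> {l'..m'}" using lmJ by auto
    next
      fix p assume p: "p \<in> {l'..m'}"
      then have pN: "p \<in> {1..N}" using l'N by auto
      have "Q l' \<le> Q p" "Q p \<le> Q m'" using p pN l'N by (auto intro!: Qmono)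
      moreover have "Q l' = c # w" "Q m' = c # w" using l'J m'J Jchar by auto
      ultimately have "Q p = c # w" by (metis order_antisym)
      then show "p \<in> J" using Jchar pN by simp
    qed
    have isb: "is_block (BB (Suc h)) (length t0 + length t1) l' m'"
      unfolding is_block_def N_def[symmetric]
    proof (intro conjI allI impI)
      show "1 \<le> l'" "l' \<le> m'" "m' \<le> N" using l'N lmJ[OF l'J] by auto
      show "BB (Suc h) l' \<noteq> 0"
      proof (cases "l' = 1")
        case True then show ?thesis using invS unfolding INV_def by simp
      next
        case False
        then have l2: "l' \<in> {2..N}" using l'N by auto
        have "l' - 1 \<notin> J" using lmJ False l'N by fastforce
        then have "Q (l' - 1) \<noteq> c # w" using Jchar l2 by auto
        moreover have "Q l' = c # w" using l'J Jchar by auto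
        ultimately show ?thesis using Bk[OF invS l2] unfolding Q_def by auto
      qed
      fix i assume i: "l' < i \<and> i \<le> m'"
      then have i2: "i \<in> {2..N}" using l'N by auto
      have "i \<in> J" "i - 1 \<in> J" using i JI by auto
      then have "Q (i - 1) = Q i" using Jchar by auto
      then show "BB (Suc h) i = 0" using Bk[OF invS i2] unfolding Q_def by auto
    next
      show "BB (Suc h) (m' + 1) \<noteq> 0"
      proof (cases "m' = N")
        case True then show ?thesis using invS unfolding INV_def by simp
      next
        case False
        then have m2: "m' + 1 \<in> {2..N}" using l'N by auto
        have "m' + 1 \<notin> J" using lmJ by fastforce
        then have "Q (m' + 1) \<noteq> c # w" using Jchar m2 by auto
        moreover have "Q m' = c # w" using m'J Jchar by auto
        ultimately show ?thesis using Bk[OF invS m2] unfolding Q_def by auto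
      qed
    qed
    have allJ: "ZZ (Suc h) p = b0" if p: "p \<in> J" for p
    proof -
      obtain k where k: "k \<in> {l..m}" "rd (ZZ h) k = c" "p = jj (ZZ h) k" using J1 p by blast
      have kN: "k \<in> {1..N}" using k lm by auto
      define x where "x = itm h k"
      have x: "x \<in> Its" using itm_Its kN x_def by simp
      have "p = pos (Suc h) (lf x)" using jj_itm[OF invh kN] k x_def by simp
      then have "ZZ (Suc h) p = fst x" using Z_Suc[OF invh x] by simp
      also have "\<dots> = ZZ h k" using Zk[OF invh kN] x_def by simp
      also have "\<dots> = b0" using allb0 k by simp
      finally show ?thesis .
    qed
    have "monochrome (ZZ (Suc h)) l' m'"
      unfolding monochrome_def using allJ b01 JI by auto
    then show "\<exists>l' m'. J = {l'..m'} \<and> is_block (BB (Suc h)) (length t0 + length t1) l' m' \<and>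
                    monochrome (ZZ (Suc h)) l' m'"
      using JI isb by blast
  qed
  show ?thesis using part1 part2 by (simp add: Let_def)
qed

end

theorem lemma6:
  fixes t0 t1 :: "'a::{linorder, finite} list" and d0 d1 :: 'a and h l m :: nat
  assumes "valid_texts t0 t1 d0 d1"
    and "is_block (Bh t0 t1 d0 d1 h) (length t0 + length t1) l m"
    and "monochrome (Zh t0 t1 d0 d1 h) l m"
  shows "(\<forall>g > h. \<forall>i \<in> {l..m}. Zh t0 t1 d0 d1 g i = Zh t0 t1 d0 d1 h i) \<and>
         (\<forall>c. let J = {j. \<exists>k \<in> {l..m}. (k, c, j) \<in> set (iter_log t0 t1 d0 d1 h)}
              in J \<noteq> {} \<longrightarrow>
                 (\<exists>l' m'. J = {l'..m'} \<and>
                    is_block (Bh t0 t1 d0 d1 (Suc h)) (length t0 + length t1) l' m' \<and>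
                    monochrome (Zh t0 t1 d0 d1 (Suc h)) l' m'))"
proof -
  interpret mctx t0 t1 d0 d1 using assms(1) by unfold_locales
  show ?thesis by (rule main[OF assms(2,3)])
qed


end
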